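(* Let $\lambda_1,\dots,\lambda_n$ be coherent probability measures on $\overline{\mathbb D}^2$, let $H$ be the set of $\phi\in\mathrm{Homeo}(\overline{\mathbb D}^2,\partial\overline{\mathbb D}^2)$ preserving each $\lambda_i$, and let $\Gamma=\{j(\phi):\phi\in H\}\subset\mathrm{Aut}((\overline{\mathbb D}^2)^n,\lambda_1\times\cdots\times\lambda_n)$, where $j(\phi)(p_1,\dots,p_n)=(\phi(p_1),\dots,\phi(p_n))$. Then the map $(\overline{\mathbb D}^2)^n\times\Gamma\to\mathcal F_n$, $(P_n,j(\phi))\mapsto\beta(P_n;\phi)$, is a cocycle of the dynamical system $((\overline{\mathbb D}^2)^n,\mathcal B((\overline{\mathbb D}^2)^n),\lambda_1\times\cdots\times\lambda_n,\Gamma)$ with values in $\mathcal F_n$; that is, it is measurable and for all $\phi,\psi\in H$ and $\lambda_1\times\cdots\times\lambda_n$-a.e. $P_n$, $\beta(P_n;\psi\circ\phi)=\beta(P_n;\phi)\,\beta(j(\phi)(P_n);\psi)$.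
   Context: $\mathcal B((\overline{\mathbb D}^2)^n)$ is the Borel $\sigma$-algebra. $\overline{\mathbb D}^2$ is the closed unit disk in $\mathbb R^2$, $\mathbb D^2$ its interior. Fix $n\ge1$ and distinct points $q_1,\dots,q_n\in\mathbb D^2$ equally spaced, in this order, on a diameter. The Artin braid group $B_n$ has generators $\sigma_1,\dots,\sigma_{n-1}$ with relations $\sigma_i\sigma_j=\sigma_j\sigma_i$ ($|i-j|\ge2$) and $\sigma_i\sigma_{i+1}\sigma_i=\sigma_{i+1}\sigma_i\sigma_{i+1}$; geometrically, $B_n$ is the set of equivalence classes (under continuous deformation through such objects) of geometrical braids, i.e. unions of $n$ arcs $\{(\gamma_i(t),t):t\in[0,1]\}\subset\mathbb D^2\times[0,1]$ with $\gamma_i(t)\ne\gamma_j(t)$ for $i\ne j$, joining $\{q_1,\dots,q_n\}\times\{0\}$ to $\{q_1,\dots,q_n\}\times\{1\}$, with product $bc$ given by concatenation ($b$ below $c$). The pure braid group $\mathcal F_n$ consists of classes with $\gamma_i(0)=\gamma_i(1)$ for all $i$. $\mathrm{Homeo}(\overline{\mathbb D}^2,\partial\overline{\mathbb D}^2)$ is the group of homeomorphisms of $\overline{\mathbb D}^2$ equal to the identity near the boundary. $\Omega^{2n}$ is the set of $(p_1,\dots,p_n)\in(\overline{\mathbb D}^2)^n$ such that for all $i\ne j$ and all $s\in[0,1]$, $(1-s)q_i+sp_i\ne(1-s)q_j+sp_j$. For $\phi\in\mathrm{Homeo}(\overline{\mathbb D}^2,\partial\overline{\mathbb D}^2)$ and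 $P_n=(p_1,\dots,p_n)$ with pairwise distinct $p_i\in\mathbb D^2$ such that both $P_n$ and $j(\phi)(P_n)$ lie in $\Omega^{2n}$, $\beta(P_n;\phi)\in\mathcal F_n$ is the class of the geometrical braid whose $i$-th strand is: the segment from $(q_i,0)$ to $(p_i,1/3)$, then the arc $(\phi_{3t-1}(p_i),t)$, $t\in[1/3,2/3]$, where $(\phi_\tau)$ is any isotopy in $\mathrm{Homeo}(\overline{\mathbb D}^2,\partial\overline{\mathbb D}^2)$ from the identity to $\phi$, then the segment from $(\phi(p_i),2/3)$ to $(q_i,1)$ (independent of the isotopy). Probability measures $\lambda_1,\dots,\lambda_n$ on $\overline{\mathbb D}^2$ are coherent if $\Omega^{2n}$ has full $\lambda_1\times\cdots\times\lambda_n$-measure. A cocycle of $(X,\mathcal B,\mu,\Gamma)$ with values in $G$ is a measurable $\alpha:X\times\Gamma\to G$ with $\alpha(x,\gamma_1\gamma_2)=\alpha(x,\gamma_1)\alpha(\gamma_1x,\gamma_2)$ for all $\gamma_1,\gamma_2$ and a.e. $x$, where $\gamma_1\gamma_2$ denotes applying $\gamma_1$ first and then $\gamma_2$. *)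

theory Defs
  imports "HOL-Analysis.Analysis" "HOL-Probability.Probability"
begin

text \<open>Points of the plane are complex numbers; the closed disk is cball 0 1,
  the open disk ball 0 1.  An n-tuple (p_1,...,p_n) is a function
  nat => complex, indices 0..n-1, value undefined outside (as in PiE / PiM).\<close>

text \<open>Base points q_0,...,q_{n-1}: distinct, in the open disk, equally spaced in this
  order on a diameter (a line through the centre).\<close>
definition base_points :: "nat \<Rightarrow> (nat \<Rightarrow> complex) \<Rightarrow> bool" where
  "base_points n q \<longleftrightarrow>
     (\<exists>c d. d \<noteq> 0 \<and> (\<exists>r::real. c = r *\<^sub>R d) \<and> (\<forall>i<n. q i = c + of_nat i * d))
     \<and> (\<forall>i<n. q i \<in> ball 0 1)"

definition Conf :: "nat \<Rightarrow> (nat \<Rightarrow> complex) set" where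
  "Conf n = {x. (\<forall>i<n. x i \<in> ball 0 1) \<and> (\<forall>i<n. \<forall>j<n. i \<noteq> j \<longrightarrow> x i \<noteq> x j)
                \<and> (\<forall>i. n \<le> i \<longrightarrow> x i = undefined)}"

text \<open>A geometric pure braid is a path in Conf n from q to q; its class (an element of
  the pure braid group F_n) is its path-homotopy class in Conf n.\<close>
definition braid_class :: "nat \<Rightarrow> (real \<Rightarrow> nat \<Rightarrow> complex) \<Rightarrow> (real \<Rightarrow> nat \<Rightarrow> complex) set" where
  "braid_class n g = {h. homotopic_paths (Conf n) g h}"

text \<open>Product of classes: concatenation, first factor below (run first).\<close>
definition braid_mult :: "nat \<Rightarrow> (real \<Rightarrow> nat \<Rightarrow> complex) set \<Rightarrow> (real \<Rightarrow> nat \<Rightarrow> complex) set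
                           \<Rightarrow> (real \<Rightarrow> nat \<Rightarrow> complex) set" where
  "braid_mult n A B = {k. \<exists>a\<in>A. \<exists>b\<in>B. homotopic_paths (Conf n) k (a +++ b)}"

definition Omega :: "nat \<Rightarrow> (nat \<Rightarrow> complex) \<Rightarrow> (nat \<Rightarrow> complex) set" where
  "Omega n q = {P \<in> PiE {..<n} (\<lambda>_. cball 0 1).
      \<forall>i<n. \<forall>j<n. i \<noteq> j \<longrightarrow>
        (\<forall>s\<in>{0..1::real}. (1 - s) *\<^sub>R q i + s *\<^sub>R P i \<noteq> (1 - s) *\<^sub>R q j + s *\<^sub>R P j)}"

definition jmap :: "nat \<Rightarrow> (complex \<Rightarrow> complex) \<Rightarrow> (nat \<Rightarrow> complex) \<Rightarrow> nat \<Rightarrow> complex" where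
  "jmap n \<phi> P = (\<lambda>i. if i < n then \<phi> (P i) else undefined)"

definition rel_homeo :: "(complex \<Rightarrow> complex) \<Rightarrow> bool" where
  "rel_homeo \<phi> \<longleftrightarrow> (\<exists>g. homeomorphism (cball 0 1) (cball 0 1) \<phi> g)
     \<and> (\<exists>\<epsilon>>0. \<forall>z. 1 - \<epsilon> < norm z \<and> norm z \<le> 1 \<longrightarrow> \<phi> z = z)"

definition disk_isotopy :: "(real \<Rightarrow> complex \<Rightarrow> complex) \<Rightarrow> (complex \<Rightarrow> complex) \<Rightarrow> bool" where
  "disk_isotopy I \<phi> \<longleftrightarrow> continuous_on ({0..1} \<times> cball 0 1) (\<lambda>(t, z). I t z)
     \<and> (\<forall>t\<in>{0..1}. rel_homeo (I t))
     \<and> (\<forall>z\<in>cball 0 1. I 0 z = z \<and> I 1 z = \<phi> z)"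

definition braid_path :: "nat \<Rightarrow> (nat \<Rightarrow> complex) \<Rightarrow> (nat \<Rightarrow> complex) \<Rightarrow> (real \<Rightarrow> complex \<Rightarrow> complex)
                           \<Rightarrow> (complex \<Rightarrow> complex) \<Rightarrow> real \<Rightarrow> nat \<Rightarrow> complex" where
  "braid_path n q P I \<phi> = (\<lambda>t i. if i < n then
      (if t \<le> 1/3 then (1 - 3*t) *\<^sub>R q i + (3*t) *\<^sub>R P i
       else if t \<le> 2/3 then I (3*t - 1) (P i)
       else (1 - (3*t - 2)) *\<^sub>R \<phi> (P i) + (3*t - 2) *\<^sub>R q i)
     else undefined)"

text \<open>beta(P;phi), as a pure braid class; the empty set where it is not defined.
  The class of any isotopy is taken (the union over isotopies, which is one class
  since the class is independent of the isotopy).\<close>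
definition beta :: "nat \<Rightarrow> (nat \<Rightarrow> complex) \<Rightarrow> (nat \<Rightarrow> complex) \<Rightarrow> (complex \<Rightarrow> complex)
                     \<Rightarrow> (real \<Rightarrow> nat \<Rightarrow> complex) set" where
  "beta n q P \<phi> =
     (if P \<in> Omega n q \<and> jmap n \<phi> P \<in> Omega n q \<and> (\<forall>i<n. P i \<in> ball 0 1)
           \<and> (\<forall>i<n. \<forall>j<n. i \<noteq> j \<longrightarrow> P i \<noteq> P j)
      then {h. \<exists>I. disk_isotopy I \<phi> \<and> h \<in> braid_class n (braid_path n q P I \<phi>)}
      else {})"

definition preserves :: "(complex \<Rightarrow> complex) \<Rightarrow> complex measure \<Rightarrow> bool" where
  "preserves \<phi> M \<longleftrightarrow> \<phi> \<in> measurable M M \<and> distr M M \<phi> = M"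

end

theory Submission
  imports Defs
begin

lemma rh_homeo: assumes "rel_homeo \<phi>" obtains g where "homeomorphism (cball 0 1) (cball 0 1) \<phi> g"
  using assms unfolding rel_homeo_def by blast

lemma rh_cball: assumes "rel_homeo \<phi>" "z \<in> cball 0 1" shows "\<phi> z \<in> cball 0 1"
proof -
  obtain g where g: "homeomorphism (cball 0 1) (cball 0 1) \<phi> g" using rh_homeo[OF assms(1)] by blast
  show ?thesis using homeomorphism_image1[OF g] assms(2) by blast
qed

lemma rh_cont: assumes "rel_homeo \<phi>" shows "continuous_on (cball 0 1) \<phi>"
proof -
  obtain g where g: "homeomorphism (cball 0 1) (cball 0 1) \<phi> g" using rh_homeo[OF assms(1)] by blast
  show ?thesis using homeomorphism_cont1[OF g] .
qed

lemma rh_inj: assumes "rel_homeo \<phi>" "z \<in> cball 0 1" "w \<in> cball 0 1" "\<phi> z = \<phi> w" shows "z = w"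
proof -
  obtain g where g: "homeomorphism (cball 0 1) (cball 0 1) \<phi> g" using rh_homeo[OF assms(1)] by blast
  have "g (\<phi> z) = z" "g (\<phi> w) = w" using homeomorphism_apply1[OF g] assms(2,3) by blast+
  thus ?thesis using assms(4) by metis
qed

lemma rh_eps: assumes "rel_homeo \<phi>"
  obtains e where "0 < e" "e \<le> 1" "\<And>z. 1 - e < norm z \<Longrightarrow> norm z \<le> 1 \<Longrightarrow> \<phi> z = z"
proof -
  obtain e where e: "e > 0" "\<forall>z. 1 - e < norm z \<and> norm z \<le> 1 \<longrightarrow> \<phi> z = z"
    using assms unfolding rel_homeo_def by blast
  show ?thesis
    by (rule that[of "min e 1"]) (use e in auto)
qed

lemma rh_ball: assumes "rel_homeo \<phi>" "z \<in> ball 0 1" shows "\<phi> z \<in> ball 0 1"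
proof (rule ccontr)
  assume a: "\<phi> z \<notin> ball 0 1"
  obtain e where e: "0 < e" "e \<le> 1" "\<And>z. 1 - e < norm z \<Longrightarrow> norm z \<le> 1 \<Longrightarrow> \<phi> z = z"
    using rh_eps[OF assms(1)] by blast
  have c: "\<phi> z \<in> cball 0 1" using rh_cball[OF assms(1)] assms(2) by auto
  hence "norm (\<phi> z) = 1" using a by auto
  hence "\<phi> (\<phi> z) = \<phi> z" using e by auto
  hence "\<phi> z = z" using rh_inj[OF assms(1) c] assms(2) by auto
  thus False using a assms(2) by auto
qed

lemma rh_inv: assumes "rel_homeo \<phi>" "homeomorphism (cball 0 1) (cball 0 1) \<phi> g"
  shows "rel_homeo g"
proof -
  obtain e where e: "0 < e" "e \<le> 1" "\<And>z. 1 - e < norm z \<Longrightarrow> norm z \<le> 1 \<Longrightarrow> \<phi> z = z"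
    using rh_eps[OF assms(1)] by blast
  have "\<forall>z. 1 - e < norm z \<and> norm z \<le> 1 \<longrightarrow> g z = z"
  proof (intro allI impI)
    fix z :: complex assume z: "1 - e < norm z \<and> norm z \<le> 1"
    have p: "\<phi> z = z" using e(3) z by blast
    have "z \<in> cball 0 1" using z by simp
    hence "g (\<phi> z) = z" using homeomorphism_apply1[OF assms(2)] by blast
    thus "g z = z" using p by simp
  qed
  moreover have "homeomorphism (cball 0 1) (cball 0 1) g \<phi>"
    using assms(2) by (rule homeomorphism_symD)
  ultimately show ?thesis unfolding rel_homeo_def using e(1) by blast
qed

lemma rh_comp: assumes "rel_homeo f" "rel_homeo h" shows "rel_homeo (f \<circ> h)"
proof -
  obtain e1 where e1: "0 < e1" "e1 \<le> 1" "\<And>z. 1 - e1 < norm z \<Longrightarrow> norm z \<le> 1 \<Longrightarrow> f z = z"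
    using rh_eps[OF assms(1)] by blast
  obtain e2 where e2: "0 < e2" "e2 \<le> 1" "\<And>z. 1 - e2 < norm z \<Longrightarrow> norm z \<le> 1 \<Longrightarrow> h z = z"
    using rh_eps[OF assms(2)] by blast
  obtain g1 where g1: "homeomorphism (cball 0 1) (cball 0 1) f g1" using rh_homeo[OF assms(1)] by blast
  obtain g2 where g2: "homeomorphism (cball 0 1) (cball 0 1) h g2" using rh_homeo[OF assms(2)] by blast
  have "homeomorphism (cball 0 1) (cball 0 1) (f \<circ> h) (g2 \<circ> g1)"
    using homeomorphism_compose[OF g2 g1] .
  moreover have "\<forall>z. 1 - min e1 e2 < norm z \<and> norm z \<le> 1 \<longrightarrow> (f \<circ> h) z = z"
    using e1 e2 by auto
  moreover have "min e1 e2 > 0" using e1 e2 by simp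
  ultimately show ?thesis unfolding rel_homeo_def by blast
qed



definition alex :: "(complex \<Rightarrow> complex) \<Rightarrow> real \<Rightarrow> complex \<Rightarrow> complex" where
  "alex \<phi> t z = (if norm z < t then t *\<^sub>R \<phi> ((1/t) *\<^sub>R z) else z)"

lemma alex_cont:
  assumes "rel_homeo \<phi>"
  shows "continuous_on ({0..1} \<times> cball 0 1) (\<lambda>(t, z). alex \<phi> t z)"
proof -
  obtain e where e: "0 < e" "e \<le> 1" "\<And>z. 1 - e < norm z \<Longrightarrow> norm z \<le> 1 \<Longrightarrow> \<phi> z = z"
    using rh_eps[OF assms] by blast
  define X where "X = {0..1::real} \<times> cball (0::complex) 1"
  define f where "f = (\<lambda>(t, z). alex \<phi> t z)"
  have bnd: "norm (f x) \<le> fst x + norm (snd x)" if "x \<in> X" for x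
  proof -
    obtain t z where x: "x = (t, z)" by fastforce
    have t: "0 \<le> t" using that x X_def by auto
    show ?thesis
    proof (cases "norm z < t")
      case True
      hence "t > 0" using norm_ge_zero[of z] by linarith
      hence "norm ((1/t) *\<^sub>R z) < 1" using True by (simp add: field_simps)
      hence "norm (\<phi> ((1/t) *\<^sub>R z)) \<le> 1" using rh_cball[OF assms, of "(1/t) *\<^sub>R z"] by auto
      hence "norm (t *\<^sub>R \<phi> ((1/t) *\<^sub>R z)) \<le> t" using t
        by (simp add: mult_left_le)
      hence "norm (f x) \<le> t" using True x by (simp add: f_def alex_def)
      thus ?thesis using x by (smt (verit) norm_ge_zero fst_conv snd_conv)
    next
      case False
      thus ?thesis using x t by (simp add: f_def alex_def)
    qed
  qed
  have "continuous (at x within X) f" if x: "x \<in> X" for x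
  proof -
    obtain t z where xt: "x = (t, z)" by fastforce
    consider "t * (1 - e) < norm z" | "0 < t \<and> norm z < t" | "t = 0 \<and> z = 0"
    proof -
      have t: "0 \<le> t" using x xt X_def by auto
      show thesis
      proof (cases "t * (1 - e) < norm z")
        case True thus thesis using that by blast
      next
        case False
        hence a: "norm z \<le> t * (1 - e)" by simp
        show thesis
        proof (cases "t = 0")
          case True thus thesis using a that by auto
        next
          case False
          hence "t > 0" using t by auto
          hence "t * (1 - e) < t" using e by (simp add: algebra_simps)
          thus thesis using a that \<open>t > 0\<close> by linarith
        qed
      qed
    qed
    then show ?thesis
    proof cases
      case 1
      define U where "U = {y::real \<times> complex. fst y * (1 - e) < norm (snd y)}"
      have oU: "open U" unfolding U_def by (intro open_Collect_less continuous_intros)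
      have "continuous (at x within X) snd" by (intro continuous_intros)
      moreover have "openin (top_of_set X) (X \<inter> U)" using oU by (simp add: openin_open_Int)
      moreover have "x \<in> X \<inter> U" using 1 x xt U_def by auto
      moreover have "snd y = f y" if "y \<in> X \<inter> U" for y
      proof -
        obtain s w where y: "y = (s, w)" by fastforce
        have s: "0 \<le> s" "s \<le> 1" "norm w \<le> 1" using that y X_def by auto
        have lt: "s * (1 - e) < norm w" using that y U_def by auto
        show ?thesis
        proof (cases "norm w < s")
          case True
          hence "s > 0" using norm_ge_zero[of w] by linarith
          have "norm ((1/s) *\<^sub>R w) = norm w / s" using \<open>s > 0\<close> by simp
          moreover have "1 - e < norm w / s" using lt \<open>s > 0\<close> by (simp add: field_simps)
          moreover have "norm w / s \<le> 1" using True \<open>s > 0\<close> by simp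
          ultimately have "\<phi> ((1/s) *\<^sub>R w) = (1/s) *\<^sub>R w" using e(3) by auto
          thus ?thesis using True y \<open>s > 0\<close> by (simp add: f_def alex_def)
        next
          case False thus ?thesis using y by (simp add: f_def alex_def)
        qed
      qed
      ultimately show ?thesis by (rule continuous_transform_within_openin)
    next
      case 2
      define U where "U = {y::real \<times> complex. 0 < fst y \<and> norm (snd y) < fst y}"
      have oU: "open U" unfolding U_def by (intro open_Collect_less open_Collect_conj continuous_intros)
      define g where "g = (\<lambda>y::real \<times> complex. fst y *\<^sub>R \<phi> ((1 / fst y) *\<^sub>R snd y))"
      have "continuous_on U g"
        unfolding g_def
      proof (intro continuous_intros)
        show "continuous_on U (\<lambda>x. \<phi> ((1 / fst x) *\<^sub>R snd x))"
        proof (rule continuous_on_compose2[OF rh_cont[OF assms]])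
          show "continuous_on U (\<lambda>x. (1 / fst x) *\<^sub>R snd x)"
            by (intro continuous_intros) (auto simp: U_def)
          show "(\<lambda>x. (1 / fst x) *\<^sub>R snd x) ` U \<subseteq> cball 0 1"
            by (auto simp: U_def field_simps)
        qed
      qed
      hence "continuous (at x) g" using oU 2 xt U_def by (simp add: continuous_on_eq_continuous_at)
      hence "continuous (at x within X) g" by (rule continuous_at_imp_continuous_within)
      moreover have "openin (top_of_set X) (X \<inter> U)" using oU by (simp add: openin_open_Int)
      moreover have "x \<in> X \<inter> U" using 2 x xt U_def by auto
      moreover have "g y = f y" if "y \<in> X \<inter> U" for y
        using that by (cases y) (auto simp: U_def g_def f_def alex_def)
      ultimately show ?thesis by (rule continuous_transform_within_openin)
    next
      case 3
      have fx: "f x = 0" using 3 xt by (simp add: f_def alex_def)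
      have "(f \<longlongrightarrow> 0) (at x within X)"
      proof (rule Lim_null_comparison)
        show "\<forall>\<^sub>F y in at x within X. norm (f y) \<le> fst y + norm (snd y)"
          using bnd by (simp add: eventually_at_filter)
        have "((\<lambda>y. fst y + norm (snd y)) \<longlongrightarrow> fst x + norm (snd x)) (at x within X)"
          by (intro tendsto_intros)
        thus "((\<lambda>y. fst y + norm (snd y)) \<longlongrightarrow> 0) (at x within X)" using 3 xt by simp
      qed
      thus ?thesis using fx by (simp add: continuous_within)
    qed
  qed
  thus ?thesis using continuous_on_eq_continuous_within X_def f_def by blast
qed


lemma alex_maps: assumes "rel_homeo \<phi>" "t \<le> 1" "z \<in> cball 0 1" shows "alex \<phi> t z \<in> cball 0 1"
proof (cases "norm z < t")
  case True
  hence t: "t > 0" using norm_ge_zero[of z] by linarith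
  hence "norm ((1/t) *\<^sub>R z) < 1" using True by (simp add: field_simps)
  hence "norm (\<phi> ((1/t) *\<^sub>R z)) \<le> 1" using rh_cball[OF assms(1), of "(1/t) *\<^sub>R z"] by auto
  hence "norm (t *\<^sub>R \<phi> ((1/t) *\<^sub>R z)) \<le> t" using t by (simp add: mult_left_le)
  thus ?thesis using True assms(2) by (simp add: alex_def)
next
  case False thus ?thesis using assms(3) by (simp add: alex_def)
qed

lemma alex_inv: assumes "rel_homeo \<phi>" "homeomorphism (cball 0 1) (cball 0 1) \<phi> g" "z \<in> cball 0 1"
  shows "alex g t (alex \<phi> t z) = z"
proof (cases "norm z < t")
  case True
  hence t: "t > 0" using norm_ge_zero[of z] by linarith
  define w where "w = (1/t) *\<^sub>R z"
  have wb: "w \<in> ball 0 1" using True t by (simp add: w_def field_simps)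
  hence pw: "\<phi> w \<in> ball 0 1" using rh_ball[OF assms(1)] by blast
  have "norm (t *\<^sub>R \<phi> w) < t" using pw t by simp
  moreover have "(1/t) *\<^sub>R (t *\<^sub>R \<phi> w) = \<phi> w" using t by simp
  moreover have "g (\<phi> w) = w" using homeomorphism_apply1[OF assms(2)] wb by auto
  moreover have "t *\<^sub>R w = z" using t by (simp add: w_def)
  ultimately show ?thesis using True by (simp add: alex_def w_def[symmetric])
next
  case False thus ?thesis by (simp add: alex_def)
qed

lemma alex_cont1: assumes "rel_homeo \<phi>" "t \<in> {0..1}" shows "continuous_on (cball 0 1) (alex \<phi> t)"
proof -
  have "continuous_on (cball 0 1) ((\<lambda>(t, z). alex \<phi> t z) \<circ> (\<lambda>z. (t, z)))"
    by (rule continuous_on_compose[OF _ continuous_on_subset[OF alex_cont[OF assms(1)]]])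
       (use assms(2) in \<open>auto intro!: continuous_intros\<close>)
  thus ?thesis by (simp add: o_def)
qed

lemma alex_rh: assumes "rel_homeo \<phi>" "t \<in> {0..1}" shows "rel_homeo (alex \<phi> t)"
proof -
  obtain g where g: "homeomorphism (cball 0 1) (cball 0 1) \<phi> g" using rh_homeo[OF assms(1)] by blast
  have rg: "rel_homeo g" using rh_inv[OF assms(1) g] .
  have g': "homeomorphism (cball 0 1) (cball 0 1) g \<phi>" using g by (rule homeomorphism_symD)
  have h: "homeomorphism (cball 0 1) (cball 0 1) (alex \<phi> t) (alex g t)"
  proof (rule homeomorphismI)
    show "continuous_on (cball 0 1) (alex \<phi> t)" by (rule alex_cont1[OF assms])
    show "continuous_on (cball 0 1) (alex g t)" by (rule alex_cont1[OF rg assms(2)])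
    show "alex \<phi> t ` cball 0 1 \<subseteq> cball 0 1" using alex_maps[OF assms(1)] assms(2) by auto
    show "alex g t ` cball 0 1 \<subseteq> cball 0 1" using alex_maps[OF rg] assms(2) by auto
    show "alex g t (alex \<phi> t x) = x" if "x \<in> cball 0 1" for x using alex_inv[OF assms(1) g that] .
    show "alex \<phi> t (alex g t x) = x" if "x \<in> cball 0 1" for x using alex_inv[OF rg g' that] .
  qed
  obtain e where e: "0 < e" "e \<le> 1" "\<And>z. 1 - e < norm z \<Longrightarrow> norm z \<le> 1 \<Longrightarrow> \<phi> z = z"
    using rh_eps[OF assms(1)] by blast
  have "alex \<phi> t z = z" if z: "1 - e < norm z" "norm z \<le> 1" for z
  proof (cases "norm z < t")
    case True
    hence t: "t > 0" using norm_ge_zero[of z] by linarith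
    have "t \<le> 1" using assms(2) by simp
    have "norm ((1/t) *\<^sub>R z) = norm z / t" using t by simp
    moreover have "norm z \<le> norm z / t" using t \<open>t \<le> 1\<close> by (simp add: field_simps mult_left_le_one_le)
    moreover have "norm z / t < 1" using True t by simp
    ultimately have "1 - e < norm ((1/t) *\<^sub>R z)" "norm ((1/t) *\<^sub>R z) \<le> 1" using z(1) by linarith+
    hence "\<phi> ((1/t) *\<^sub>R z) = (1/t) *\<^sub>R z" using e(3) by blast
    thus ?thesis using True t by (simp add: alex_def)
  next
    case False thus ?thesis by (simp add: alex_def)
  qed
  thus ?thesis unfolding rel_homeo_def using h e(1) by blast
qed

lemma alex_iso: assumes "rel_homeo \<phi>" shows "disk_isotopy (alex \<phi>) \<phi>"
  unfolding disk_isotopy_def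
proof (intro conjI ballI)
  show "continuous_on ({0..1} \<times> cball 0 1) (\<lambda>(t, z). alex \<phi> t z)" by (rule alex_cont[OF assms])
  show "rel_homeo (alex \<phi> t)" if "t \<in> {0..1}" for t using alex_rh[OF assms that] .
  show "alex \<phi> 0 z = z" for z by (simp add: alex_def)
  show "alex \<phi> 1 z = \<phi> z" if "z \<in> cball 0 1" for z
  proof (cases "norm z < 1")
    case True thus ?thesis by (simp add: alex_def)
  next
    case False
    obtain e where e: "0 < e" "e \<le> 1" "\<And>z. 1 - e < norm z \<Longrightarrow> norm z \<le> 1 \<Longrightarrow> \<phi> z = z"
      using rh_eps[OF assms(1)] by blast
    have "norm z = 1" using False that by simp
    hence "\<phi> z = z" using e by simp
    thus ?thesis using False by (simp add: alex_def)
  qed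
qed


definition qv :: "nat \<Rightarrow> (nat \<Rightarrow> complex) \<Rightarrow> nat \<Rightarrow> complex" where
  "qv n q = (\<lambda>i. if i < n then q i else undefined)"

definition seg :: "nat \<Rightarrow> (nat \<Rightarrow> complex) \<Rightarrow> (nat \<Rightarrow> complex) \<Rightarrow> real \<Rightarrow> nat \<Rightarrow> complex" where
  "seg n x y = (\<lambda>t i. if i < n then (1 - t) *\<^sub>R x i + t *\<^sub>R y i else undefined)"

definition mid :: "nat \<Rightarrow> (real \<Rightarrow> complex \<Rightarrow> complex) \<Rightarrow> (nat \<Rightarrow> complex) \<Rightarrow> real \<Rightarrow> nat \<Rightarrow> complex" where
  "mid n I P = (\<lambda>t i. if i < n then I t (P i) else undefined)"

lemma cont_fun:
  assumes "\<And>i. i < n \<Longrightarrow> continuous_on S (\<lambda>x. f x i)"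
  shows "continuous_on S (\<lambda>x (i::nat). if i < n then f x i else (undefined::complex))"
proof (rule continuous_on_coordinatewise_then_product)
  fix i show "continuous_on S (\<lambda>x. if i < n then f x i else undefined)"
    using assms by (cases "i < n") auto
qed

lemma seg_path_conf:
  assumes "\<forall>i<n. x i \<in> ball 0 1" "\<forall>i<n. y i \<in> ball 0 1"
    and "\<forall>i<n. \<forall>j<n. i \<noteq> j \<longrightarrow> (\<forall>s\<in>{0..1::real}. (1 - s) *\<^sub>R x i + s *\<^sub>R y i \<noteq> (1 - s) *\<^sub>R x j + s *\<^sub>R y j)"
  shows "path (seg n x y) \<and> path_image (seg n x y) \<subseteq> Conf n"
proof
  show "path (seg n x y)" unfolding path_def seg_def
    by (rule cont_fun) (intro continuous_intros)
  show "path_image (seg n x y) \<subseteq> Conf n"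
  proof
    fix p assume "p \<in> path_image (seg n x y)"
    then obtain s where s: "s \<in> {0..1}" "p = seg n x y s" unfolding path_image_def by blast
    have "(1 - s) *\<^sub>R x i + s *\<^sub>R y i \<in> ball 0 1" if "i < n" for i
    proof -
      have "convex (ball (0::complex) 1)" by simp
      thus ?thesis using assms(1,2) that s(1) unfolding convex_alt
        by (metis atLeastAtMost_iff add.commute)
    qed
    thus "p \<in> Conf n" using s assms(3) unfolding Conf_def seg_def by auto
  qed
qed

lemma isotopy_ball: assumes "disk_isotopy I \<phi>" "t \<in> {0..1}" "z \<in> ball 0 1" shows "I t z \<in> ball 0 1"
  using assms rh_ball unfolding disk_isotopy_def by blast

lemma isotopy_inj: assumes "disk_isotopy I \<phi>" "t \<in> {0..1}" "z \<in> cball 0 1" "w \<in> cball 0 1" "I t z = I t w"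
  shows "z = w"
  using assms rh_inj unfolding disk_isotopy_def by blast

lemma mid_path_conf:
  assumes "disk_isotopy I \<phi>" "\<forall>i<n. P i \<in> ball 0 1" "\<forall>i<n. \<forall>j<n. i \<noteq> j \<longrightarrow> P i \<noteq> P j"
  shows "path (mid n I P) \<and> path_image (mid n I P) \<subseteq> Conf n"
proof
  have c: "continuous_on ({0..1} \<times> cball 0 1) (\<lambda>(t, z). I t z)" using assms(1) unfolding disk_isotopy_def by blast
  show "path (mid n I P)" unfolding path_def mid_def
  proof (rule cont_fun)
    fix i assume i: "i < n"
    have "continuous_on {0..1} ((\<lambda>(t, z). I t z) \<circ> (\<lambda>t. (t, P i)))"
      by (rule continuous_on_compose[OF _ continuous_on_subset[OF c]])
         (use assms(2) i in \<open>auto intro!: continuous_intros\<close>)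
    thus "continuous_on {0..1} (\<lambda>x. I x (P i))" by (simp add: o_def)
  qed
  show "path_image (mid n I P) \<subseteq> Conf n"
  proof
    fix p assume "p \<in> path_image (mid n I P)"
    then obtain s where s: "s \<in> {0..1}" "p = mid n I P s" unfolding path_image_def by blast
    have "I s (P i) \<in> ball 0 1" if "i < n" for i using isotopy_ball[OF assms(1) s(1)] assms(2) that by blast
    moreover have "I s (P i) \<noteq> I s (P j)" if "i < n" "j < n" "i \<noteq> j" for i j
      using isotopy_inj[OF assms(1) s(1)] assms(2,3) that by (meson ball_subset_cball subsetD)
    ultimately show "p \<in> Conf n" using s unfolding Conf_def mid_def by auto
  qed
qed


definition good :: "nat \<Rightarrow> (nat \<Rightarrow> complex) \<Rightarrow> (complex \<Rightarrow> complex) \<Rightarrow> (nat \<Rightarrow> complex) \<Rightarrow> bool" where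
  "good n q \<phi> P \<longleftrightarrow> P \<in> Omega n q \<and> jmap n \<phi> P \<in> Omega n q \<and> (\<forall>i<n. P i \<in> ball 0 1)"

definition fpar :: "real \<Rightarrow> real" where
  "fpar t = (if t \<le> 1/3 then 3*t/2 else if t \<le> 2/3 then 1/2 + (3*t-1)/4 else 3/4 + (3*t-2)/4)"

lemma Omega_distinct: "P \<in> Omega n q \<Longrightarrow> i < n \<Longrightarrow> j < n \<Longrightarrow> i \<noteq> j \<Longrightarrow> P i \<noteq> P j"
  unfolding Omega_def by (drule CollectD, elim conjE, drule spec[of _ i], drule mp, assumption,
      drule spec[of _ j], drule mp, assumption, drule mp, assumption, drule bspec[of _ _ 1]) auto

lemma Omega_ext: "P \<in> Omega n q \<Longrightarrow> \<not> i < n \<Longrightarrow> P i = undefined"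
  unfolding Omega_def by (auto simp: PiE_def extensional_def)

lemma q_ball: "base_points n q \<Longrightarrow> i < n \<Longrightarrow> q i \<in> ball 0 1"
  unfolding base_points_def by blast

lemma fpar_cont: "continuous_on {0..1} fpar"
proof -
  have "continuous_on {0..1} (\<lambda>t::real. if t \<le> 1/3 then 3*t/2 else (if t \<le> 2/3 then 1/2 + (3*t-1)/4 else 3/4 + (3*t-2)/4))"
  proof (rule continuous_on_cases_le)
    show "continuous_on {t \<in> {0..1}. t \<le> 1/3} (\<lambda>t::real. 3*t/2)" by (auto intro!: continuous_intros)
    show "continuous_on {t \<in> {0..1}. 1/3 \<le> t} (\<lambda>t::real. if t \<le> 2/3 then 1/2 + (3*t-1)/4 else 3/4 + (3*t-2)/4)"
      by (rule continuous_on_cases_le) (auto intro!: continuous_intros simp: field_simps)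
  qed (auto intro!: continuous_intros simp: field_simps)
  thus ?thesis unfolding fpar_def .
qed

lemma fpar_range: "t \<in> {0..1} \<Longrightarrow> fpar t \<in> {0..1}"
  unfolding fpar_def by (auto simp: field_simps)

lemma bp_reparam:
  assumes "t \<in> {0..1}"
  shows "braid_path n q P I \<phi> t = (seg n (qv n q) P +++ (mid n I P +++ seg n (jmap n \<phi> P) (qv n q))) (fpar t)"
proof (cases "t \<le> 1/3")
  case True
  have e: "fpar t = 3*t/2" using True by (auto simp: fpar_def)
  have j: "3*t/2 \<le> 1/2" using True by simp
  show ?thesis unfolding e joinpaths_def braid_path_def seg_def qv_def
    by (simp only: if_P[OF True] if_P[OF j]) (rule ext, simp)
next
  case F1: False
  show ?thesis
  proof (cases "t \<le> 2/3")
    case True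
    have e: "fpar t = 1/2 + (3*t-1)/4" using True F1 by (auto simp: fpar_def)
    have j1: "\<not> 1/2 + (3*t-1)/4 \<le> 1/2" "(2 * (1/2 + (3*t-1)/4) - 1) \<le> 1/2"
      "2 * (2 * (1/2 + (3*t-1)/4) - 1) = 3*t-1" using True F1 by (auto simp: field_simps)
    show ?thesis unfolding e joinpaths_def braid_path_def mid_def
      by (simp only: if_not_P[OF F1] if_P[OF True] if_not_P[OF j1(1)] if_P[OF j1(2)] j1(3))
  next
    case False
    have e: "fpar t = 3/4 + (3*t-2)/4" using False F1 by (auto simp: fpar_def)
    have j1: "\<not> 3/4 + (3*t-2)/4 \<le> 1/2" "\<not> (2 * (3/4 + (3*t-2)/4) - 1) \<le> 1/2"
      "2 * (2 * (3/4 + (3*t-2)/4) - 1) - 1 = 3*t-2" using False F1 by (auto simp: field_simps)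
    show ?thesis unfolding e joinpaths_def braid_path_def seg_def qv_def jmap_def
      by (simp only: if_not_P[OF F1] if_not_P[OF False] if_not_P[OF j1(1)] if_not_P[OF j1(2)] j1(3)) (rule ext, simp)
  qed
qed


lemma good_pieces:
  assumes bq: "base_points n q" and I: "disk_isotopy I \<phi>" and rh: "rel_homeo \<phi>" and g: "good n q \<phi> P"
  shows "path (seg n (qv n q) P) \<and> path_image (seg n (qv n q) P) \<subseteq> Conf n"
    "path (mid n I P) \<and> path_image (mid n I P) \<subseteq> Conf n"
    "path (seg n (jmap n \<phi> P) (qv n q)) \<and> path_image (seg n (jmap n \<phi> P) (qv n q)) \<subseteq> Conf n"
    "pathstart (seg n (qv n q) P) = qv n q" "pathfinish (seg n (qv n q) P) = P"
    "pathstart (mid n I P) = P" "pathfinish (mid n I P) = jmap n \<phi> P"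
    "pathstart (seg n (jmap n \<phi> P) (qv n q)) = jmap n \<phi> P"
    "pathfinish (seg n (jmap n \<phi> P) (qv n q)) = qv n q"
proof -
  have PO: "P \<in> Omega n q" and JO: "jmap n \<phi> P \<in> Omega n q" and Pb: "\<forall>i<n. P i \<in> ball 0 1"
    using g unfolding good_def by auto
  have qb: "\<forall>i<n. qv n q i \<in> ball 0 1" using q_ball[OF bq] by (simp add: qv_def)
  have Jb: "\<forall>i<n. jmap n \<phi> P i \<in> ball 0 1" using Pb rh_ball[OF rh] by (simp add: jmap_def)
  show "path (seg n (qv n q) P) \<and> path_image (seg n (qv n q) P) \<subseteq> Conf n"
  proof (rule seg_path_conf[OF qb Pb])
    show "\<forall>i<n. \<forall>j<n. i \<noteq> j \<longrightarrow> (\<forall>s\<in>{0..1}. (1 - s) *\<^sub>R qv n q i + s *\<^sub>R P i \<noteq> (1 - s) *\<^sub>R qv n q j + s *\<^sub>R P j)"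
      using PO unfolding Omega_def qv_def by auto
  qed
  show "path (seg n (jmap n \<phi> P) (qv n q)) \<and> path_image (seg n (jmap n \<phi> P) (qv n q)) \<subseteq> Conf n"
  proof (rule seg_path_conf[OF Jb qb])
    show "\<forall>i<n. \<forall>j<n. i \<noteq> j \<longrightarrow> (\<forall>s\<in>{0..1}. (1 - s) *\<^sub>R jmap n \<phi> P i + s *\<^sub>R qv n q i \<noteq> (1 - s) *\<^sub>R jmap n \<phi> P j + s *\<^sub>R qv n q j)"
    proof (intro allI impI ballI)
      fix i j s assume ij: "i < n" "j < n" "i \<noteq> j" and s: "s \<in> {0..1::real}"
      have "1 - s \<in> {0..1::real}" using s by auto
      hence "(1 - (1 - s)) *\<^sub>R q i + (1 - s) *\<^sub>R jmap n \<phi> P i \<noteq> (1 - (1 - s)) *\<^sub>R q j + (1 - s) *\<^sub>R jmap n \<phi> P j"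
        using JO ij unfolding Omega_def by blast
      thus "(1 - s) *\<^sub>R jmap n \<phi> P i + s *\<^sub>R qv n q i \<noteq> (1 - s) *\<^sub>R jmap n \<phi> P j + s *\<^sub>R qv n q j"
        using ij by (simp add: qv_def add.commute)
    qed
  qed
  show "path (mid n I P) \<and> path_image (mid n I P) \<subseteq> Conf n"
    by (rule mid_path_conf[OF I Pb]) (use Omega_distinct[OF PO] in blast)
  show "pathstart (seg n (qv n q) P) = qv n q" by (auto simp: pathstart_def seg_def qv_def)
  show "pathfinish (seg n (qv n q) P) = P" by (auto simp: pathfinish_def seg_def Omega_ext[OF PO])
  show "pathstart (mid n I P) = P"
  proof (rule ext)
    fix i show "pathstart (mid n I P) i = P i"
    proof (cases "i < n")
      case True
      hence "P i \<in> cball 0 1" using Pb by auto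
      thus ?thesis using I True by (simp add: pathstart_def mid_def disk_isotopy_def)
    next
      case False thus ?thesis using Omega_ext[OF PO False] by (simp add: pathstart_def mid_def)
    qed
  qed
  show "pathfinish (mid n I P) = jmap n \<phi> P"
  proof (rule ext)
    fix i show "pathfinish (mid n I P) i = jmap n \<phi> P i"
    proof (cases "i < n")
      case True
      hence "P i \<in> cball 0 1" using Pb by auto
      thus ?thesis using I True by (simp add: pathfinish_def mid_def disk_isotopy_def jmap_def)
    next
      case False thus ?thesis by (simp add: pathfinish_def mid_def jmap_def)
    qed
  qed
  show "pathstart (seg n (jmap n \<phi> P) (qv n q)) = jmap n \<phi> P" by (auto simp: pathstart_def seg_def jmap_def)
  show "pathfinish (seg n (jmap n \<phi> P) (qv n q)) = qv n q" by (auto simp: pathfinish_def seg_def qv_def)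
qed

lemma join3:
  assumes "path a \<and> path_image a \<subseteq> S" "path b \<and> path_image b \<subseteq> S" "path c \<and> path_image c \<subseteq> S"
    "pathfinish a = pathstart b" "pathfinish b = pathstart c"
  shows "path (a +++ (b +++ c)) \<and> path_image (a +++ (b +++ c)) \<subseteq> S"
proof
  have "pathfinish a = pathstart (b +++ c)" using assms by simp
  thus "path (a +++ (b +++ c))" using assms by (meson path_join_imp)
  show "path_image (a +++ (b +++ c)) \<subseteq> S" using assms by (meson subset_path_image_join)
qed

lemma bp_hom:
  assumes bq: "base_points n q" and I: "disk_isotopy I \<phi>" and rh: "rel_homeo \<phi>" and g: "good n q \<phi> P"
  shows "homotopic_paths (Conf n) (seg n (qv n q) P +++ (mid n I P +++ seg n (jmap n \<phi> P) (qv n q)))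
           (braid_path n q P I \<phi>)"
proof (rule homotopic_paths_reparametrize)
  note gp = good_pieces[OF assms]
  have j: "path (seg n (qv n q) P +++ (mid n I P +++ seg n (jmap n \<phi> P) (qv n q))) \<and>
       path_image (seg n (qv n q) P +++ (mid n I P +++ seg n (jmap n \<phi> P) (qv n q))) \<subseteq> Conf n"
    by (rule join3) (use gp in auto)
  thus "path (seg n (qv n q) P +++ (mid n I P +++ seg n (jmap n \<phi> P) (qv n q)))"
       "path_image (seg n (qv n q) P +++ (mid n I P +++ seg n (jmap n \<phi> P) (qv n q))) \<subseteq> Conf n" by auto
  show "continuous_on {0..1} fpar" by (rule fpar_cont)
  show "fpar \<in> {0..1} \<rightarrow> {0..1}" using fpar_range by blast
  show "fpar 0 = 0" "fpar 1 = 1" by (auto simp: fpar_def)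
  show "braid_path n q P I \<phi> t = (seg n (qv n q) P +++ (mid n I P +++ seg n (jmap n \<phi> P) (qv n q))) (fpar t)"
    if "t \<in> {0..1}" for t using bp_reparam[OF that] .
qed


lemma my_rinv:
  fixes p :: "real \<Rightarrow> 'a::topological_space"
  assumes "path p" "path_image p \<subseteq> S"
  shows "homotopic_paths S (p +++ reversepath p) (\<lambda>_. pathstart p)"
proof -
  have p: "continuous_on {0..1} p"
    using assms by (auto simp: path_def)
  let ?A = "{0..1} \<times> {0..1}"
  have "continuous_on ?A (\<lambda>x. ((\<lambda>t. p (fst x * t)) +++ reversepath ((\<lambda>t. p (fst x * t)))) (snd x))"
    unfolding joinpaths_def reversepath_def path_def
  proof (rule continuous_on_cases_le)
    show "continuous_on {x \<in> ?A. snd x \<le> 1/2} (\<lambda>t. p (fst t * (2 * snd t)))"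
         "continuous_on {x \<in> ?A. 1/2 \<le> snd x} (\<lambda>t. p (fst t * (1 - (2 * snd t - 1))))"
         "continuous_on ?A snd"
      by (intro continuous_on_compose2 [OF p] continuous_intros; auto simp: mult_le_one)+
  qed (auto simp: algebra_simps)
  then show ?thesis
    using assms
    apply (subst homotopic_paths_sym_eq)
    unfolding homotopic_paths_def homotopic_with_def
    apply (rule_tac x="(\<lambda>y. ((\<lambda>t. p (fst y * t)) +++ reversepath((\<lambda>t. p (fst y * t)))) (snd y))" in exI)
    apply (force simp: mult_le_one path_defs joinpaths_def reversepath_def)
    done
qed

lemma my_lid:
  fixes p :: "real \<Rightarrow> 'a::topological_space"
  assumes "path p" "path_image p \<subseteq> S"
  shows "homotopic_paths S ((\<lambda>_. pathstart p) +++ p) p"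
proof -
  have c: "continuous_on {0..1} (\<lambda>t::real. if t \<le> 1/2 then 0 else 2 * t - 1)"
    by (rule continuous_on_cases_le) (auto intro!: continuous_intros)
  have "homotopic_paths S p ((\<lambda>_. pathstart p) +++ p)"
    by (rule homotopic_paths_reparametrize[OF assms c])
       (auto simp: joinpaths_def pathstart_def)
  thus ?thesis by (rule homotopic_paths_sym)
qed

lemma cancel_hom:
  fixes C Z :: "real \<Rightarrow> 'a::topological_space"
  assumes "path C" "path_image C \<subseteq> S" "path Z" "path_image Z \<subseteq> S" "pathstart Z = pathstart C"
  shows "homotopic_paths S (C +++ (reversepath C +++ Z)) Z"
proof -
  have "homotopic_paths S (C +++ (reversepath C +++ Z)) ((C +++ reversepath C) +++ Z)"
    by (rule homotopic_paths_assoc) (use assms in auto)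
  also have "homotopic_paths S ((C +++ reversepath C) +++ Z) ((\<lambda>_. pathstart C) +++ Z)"
    by (rule homotopic_paths_join[OF my_rinv[OF assms(1,2)]]) (use assms in auto)
  also have "homotopic_paths S ((\<lambda>_. pathstart C) +++ Z) Z"
    using my_lid[OF assms(3,4)] assms(5) by simp
  finally show ?thesis .
qed

lemma key_hom:
  fixes A X C1 Y C :: "real \<Rightarrow> 'a::topological_space"
  assumes "path A" "path_image A \<subseteq> S" "path X" "path_image X \<subseteq> S" "path C1" "path_image C1 \<subseteq> S"
    "path Y" "path_image Y \<subseteq> S" "path C" "path_image C \<subseteq> S"
    "pathfinish A = pathstart X" "pathfinish X = pathstart C1" "pathstart Y = pathfinish X"
    "pathfinish Y = pathstart C"
  shows "homotopic_paths S ((A +++ (X +++ C1)) +++ (reversepath C1 +++ (Y +++ C))) (A +++ ((X +++ Y) +++ C))"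
proof -
  have XC1: "path (X +++ C1)" "path_image (X +++ C1) \<subseteq> S" using assms
    by (meson path_join_imp subset_path_image_join)+
  have YC: "path (Y +++ C)" "path_image (Y +++ C) \<subseteq> S" "pathstart (Y +++ C) = pathstart Y" using assms
    by (meson path_join_imp subset_path_image_join pathstart_join)+
  have R: "path (reversepath C1 +++ (Y +++ C))" "path_image (reversepath C1 +++ (Y +++ C)) \<subseteq> S"
    using assms YC by (metis path_join_imp subset_path_image_join path_reversepath path_image_reversepath pathfinish_reversepath)+
  have "homotopic_paths S ((A +++ (X +++ C1)) +++ (reversepath C1 +++ (Y +++ C)))
        (A +++ ((X +++ C1) +++ (reversepath C1 +++ (Y +++ C))))"
    by (rule homotopic_paths_sym, rule homotopic_paths_assoc) (use assms XC1 R in auto)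
  also have "homotopic_paths S (A +++ ((X +++ C1) +++ (reversepath C1 +++ (Y +++ C))))
         (A +++ (X +++ (C1 +++ (reversepath C1 +++ (Y +++ C)))))"
  proof (rule homotopic_paths_join)
    show "homotopic_paths S A A" using assms by simp
    show "homotopic_paths S ((X +++ C1) +++ reversepath C1 +++ Y +++ C) (X +++ C1 +++ reversepath C1 +++ Y +++ C)"
      by (rule homotopic_paths_sym, rule homotopic_paths_assoc) (use assms R in auto)
  qed (use assms in auto)
  also have "homotopic_paths S (A +++ (X +++ (C1 +++ (reversepath C1 +++ (Y +++ C)))))
         (A +++ (X +++ (Y +++ C)))"
  proof (rule homotopic_paths_join)
    show "homotopic_paths S A A" using assms by simp
    show "homotopic_paths S (X +++ C1 +++ reversepath C1 +++ Y +++ C) (X +++ Y +++ C)"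
    proof (rule homotopic_paths_join)
      show "homotopic_paths S X X" using assms by simp
      show "homotopic_paths S (C1 +++ reversepath C1 +++ Y +++ C) (Y +++ C)"
        by (rule cancel_hom) (use assms YC in auto)
    qed (use assms in auto)
  qed (use assms in auto)
  also have "homotopic_paths S (A +++ (X +++ (Y +++ C))) (A +++ ((X +++ Y) +++ C))"
  proof (rule homotopic_paths_join)
    show "homotopic_paths S A A" using assms by simp
    show "homotopic_paths S (X +++ Y +++ C) ((X +++ Y) +++ C)"
      by (rule homotopic_paths_assoc) (use assms in auto)
  qed (use assms in auto)
  finally show ?thesis .
qed


lemma cont_iso_comp:
  assumes c: "continuous_on ({0..1} \<times> cball 0 1) (\<lambda>(t, z). I t z)" and a: "continuous_on T a"
    and ar: "\<forall>x\<in>T. a x \<in> {0..1}" and u: "continuous_on (cball 0 1) u"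
    and Tc: "\<forall>x\<in>T. snd x \<in> cball (0::complex) 1" and ur: "\<forall>z\<in>cball 0 1. u z \<in> cball (0::complex) 1"
  shows "continuous_on T (\<lambda>x. I (a x) (u (snd x)))"
proof -
  have us: "continuous_on T (\<lambda>x. u (snd x))"
    by (rule continuous_on_compose2[OF u]) (use Tc in \<open>auto intro!: continuous_intros\<close>)
  have "continuous_on T (\<lambda>x. (\<lambda>(t, z). I t z) (a x, u (snd x)))"
    by (rule continuous_on_compose2[OF c]) (use a us ar Tc ur in \<open>auto intro!: continuous_intros\<close>)
  thus ?thesis by simp
qed

lemma iso_concat:
  assumes I: "disk_isotopy I \<phi>" and J: "disk_isotopy J \<psi>" and rh: "rel_homeo \<phi>"
  shows "disk_isotopy (\<lambda>t z. if t \<le> 1/2 then I (2*t) z else J (2*t-1) (\<phi> z)) (\<psi> \<circ> \<phi>)"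
  unfolding disk_isotopy_def
proof (intro conjI ballI)
  have cI: "continuous_on ({0..1} \<times> cball 0 1) (\<lambda>(t, z). I t z)" using I unfolding disk_isotopy_def by blast
  have cJ: "continuous_on ({0..1} \<times> cball 0 1) (\<lambda>(t, z). J t z)" using J unfolding disk_isotopy_def by blast
  have cc: "continuous_on ({0..1} \<times> cball 0 1) (\<lambda>x. if fst x \<le> 1/2 then I (2 * fst x) (id (snd x)) else J (2 * fst x - 1) (\<phi> (snd x)))"
  proof (rule continuous_on_cases_le)
    show "continuous_on {x \<in> {0..1} \<times> cball 0 1. fst x \<le> 1 / 2} (\<lambda>x. I (2 * fst x) (id (snd x)))"
      by (rule cont_iso_comp[OF cI]) (auto intro!: continuous_intros)
    show "continuous_on {x \<in> {0..1} \<times> cball 0 1. 1/2 \<le> fst x} (\<lambda>x. J (2 * fst x - 1) (\<phi> (snd x)))"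
      by (rule cont_iso_comp[OF cJ]) (use rh_cball[OF rh] in \<open>auto intro!: continuous_intros rh_cont[OF rh]\<close>)
    show "continuous_on ({0..1} \<times> cball 0 1) fst" by (intro continuous_intros)
    show "I (2 * fst x) (id (snd x)) = J (2 * fst x - 1) (\<phi> (snd x))" if "x \<in> {0..1} \<times> cball 0 1" "fst x = 1/2" for x
    proof -
      have "snd x \<in> cball 0 1" "\<phi> (snd x) \<in> cball 0 1" using that rh_cball[OF rh] by auto
      moreover have "2 * fst x = 1" "2 * fst x - 1 = 0" using that by auto
      ultimately show ?thesis using I J unfolding disk_isotopy_def by simp
    qed
  qed
  have "(\<lambda>x. if fst x \<le> 1/2 then I (2 * fst x) (id (snd x)) else J (2 * fst x - 1) (\<phi> (snd x)))
     = (\<lambda>(t, z). if t \<le> 1/2 then I (2*t) z else J (2*t-1) (\<phi> z))" by (auto simp: fun_eq_iff)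
  thus "continuous_on ({0..1} \<times> cball 0 1) (\<lambda>(t, z). if t \<le> 1/2 then I (2*t) z else J (2*t-1) (\<phi> z))"
    using cc by metis
  show "rel_homeo (\<lambda>z. if t \<le> 1/2 then I (2*t) z else J (2*t-1) (\<phi> z))" if "t \<in> {0..1}" for t
  proof (cases "t \<le> 1/2")
    case True
    hence "(\<lambda>z. if t \<le> 1/2 then I (2*t) z else J (2*t-1) (\<phi> z)) = I (2*t)" by simp
    moreover have "rel_homeo (I (2*t))" using I that True unfolding disk_isotopy_def by auto
    ultimately show ?thesis by simp
  next
    case False
    hence "rel_homeo (J (2*t-1))" using J that unfolding disk_isotopy_def by auto
    hence "rel_homeo (J (2*t-1) \<circ> \<phi>)" using rh_comp rh by blast
    moreover have "(\<lambda>z. if t \<le> 1/2 then I (2*t) z else J (2*t-1) (\<phi> z)) = J (2*t-1) \<circ> \<phi>"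
      using False by (simp add: o_def)
    ultimately show ?thesis by simp
  qed
  fix z :: complex assume z: "z \<in> cball 0 1"
  show "(if (0::real) \<le> 1/2 then I (2*0) z else J (2*0-1) (\<phi> z)) = z" using I z unfolding disk_isotopy_def by auto
  show "(if (1::real) \<le> 1/2 then I (2*1) z else J (2*1-1) (\<phi> z)) = (\<psi> \<circ> \<phi>) z"
    using J z rh_cball[OF rh z] unfolding disk_isotopy_def by auto
qed

lemma iso_revcat:
  assumes I: "disk_isotopy I \<phi>" and K: "disk_isotopy K Ch" and rh: "rel_homeo \<phi>"
    and g: "homeomorphism (cball 0 1) (cball 0 1) \<phi> g" and chi: "\<forall>z\<in>cball 0 1. Ch (g z) = \<psi> z"
  shows "disk_isotopy (\<lambda>t z. if t \<le> 1/2 then I (1-2*t) (g z) else K (2*t-1) (g z)) \<psi>"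
  unfolding disk_isotopy_def
proof (intro conjI ballI)
  have rg: "rel_homeo g" by (rule rh_inv[OF rh g])
  have cI: "continuous_on ({0..1} \<times> cball 0 1) (\<lambda>(t, z). I t z)" using I unfolding disk_isotopy_def by blast
  have cK: "continuous_on ({0..1} \<times> cball 0 1) (\<lambda>(t, z). K t z)" using K unfolding disk_isotopy_def by blast
  have cc: "continuous_on ({0..1} \<times> cball 0 1) (\<lambda>x. if fst x \<le> 1/2 then I (1 - 2 * fst x) (g (snd x)) else K (2 * fst x - 1) (g (snd x)))"
  proof (rule continuous_on_cases_le)
    show "continuous_on {x \<in> {0..1} \<times> cball 0 1. fst x \<le> 1 / 2} (\<lambda>x. I (1 - 2 * fst x) (g (snd x)))"
      by (rule cont_iso_comp[OF cI]) (use rh_cball[OF rg] in \<open>auto intro!: continuous_intros rh_cont[OF rg]\<close>)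
    show "continuous_on {x \<in> {0..1} \<times> cball 0 1. 1/2 \<le> fst x} (\<lambda>x. K (2 * fst x - 1) (g (snd x)))"
      by (rule cont_iso_comp[OF cK]) (use rh_cball[OF rg] in \<open>auto intro!: continuous_intros rh_cont[OF rg]\<close>)
    show "continuous_on ({0..1} \<times> cball 0 1) fst" by (intro continuous_intros)
    show "I (1 - 2 * fst x) (g (snd x)) = K (2 * fst x - 1) (g (snd x))" if "x \<in> {0..1} \<times> cball 0 1" "fst x = 1/2" for x
    proof -
      have "g (snd x) \<in> cball 0 1" using that rh_cball[OF rg] by auto
      moreover have "1 - 2 * fst x = 0" "2 * fst x - 1 = 0" using that by auto
      ultimately show ?thesis using I K unfolding disk_isotopy_def by simp
    qed
  qed
  have "(\<lambda>x. if fst x \<le> 1/2 then I (1 - 2 * fst x) (g (snd x)) else K (2 * fst x - 1) (g (snd x)))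
     = (\<lambda>(t, z). if t \<le> 1/2 then I (1-2*t) (g z) else K (2*t-1) (g z))" by (auto simp: fun_eq_iff)
  thus "continuous_on ({0..1} \<times> cball 0 1) (\<lambda>(t, z). if t \<le> 1/2 then I (1-2*t) (g z) else K (2*t-1) (g z))"
    using cc by metis
  show "rel_homeo (\<lambda>z. if t \<le> 1/2 then I (1-2*t) (g z) else K (2*t-1) (g z))" if "t \<in> {0..1}" for t
  proof (cases "t \<le> 1/2")
    case True
    hence "rel_homeo (I (1-2*t))" using I that unfolding disk_isotopy_def by auto
    hence "rel_homeo (I (1-2*t) \<circ> g)" using rh_comp rg by blast
    moreover have "(\<lambda>z. if t \<le> 1/2 then I (1-2*t) (g z) else K (2*t-1) (g z)) = I (1-2*t) \<circ> g"
      using True by (simp add: o_def)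
    ultimately show ?thesis by simp
  next
    case False
    hence "rel_homeo (K (2*t-1))" using K that unfolding disk_isotopy_def by auto
    hence "rel_homeo (K (2*t-1) \<circ> g)" using rh_comp rg by blast
    moreover have "(\<lambda>z. if t \<le> 1/2 then I (1-2*t) (g z) else K (2*t-1) (g z)) = K (2*t-1) \<circ> g"
      using False by (simp add: o_def)
    ultimately show ?thesis by simp
  qed
  fix z :: complex assume z: "z \<in> cball 0 1"
  have gz: "g z \<in> cball 0 1" using rh_cball[OF rg z] .
  have "\<phi> (g z) = z" using homeomorphism_apply2[OF g z] .
  thus "(if (0::real) \<le> 1/2 then I (1-2*0) (g z) else K (2*0-1) (g z)) = z" using I gz unfolding disk_isotopy_def by auto
  show "(if (1::real) \<le> 1/2 then I (1-2*1) (g z) else K (2*1-1) (g z)) = \<psi> z"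
    using K gz chi z unfolding disk_isotopy_def by auto
qed


lemma beta_good: assumes "good n q \<phi> P"
  shows "beta n q P \<phi> = {h. \<exists>I. disk_isotopy I \<phi> \<and> homotopic_paths (Conf n) (braid_path n q P I \<phi>) h}"
proof -
  have "\<forall>i<n. \<forall>j<n. i \<noteq> j \<longrightarrow> P i \<noteq> P j" using assms Omega_distinct unfolding good_def by blast
  thus ?thesis using assms unfolding beta_def good_def braid_class_def by auto
qed

lemma jmap_comp: "jmap n \<psi> (jmap n \<phi> P) = jmap n (\<psi> \<circ> \<phi>) P"
  by (auto simp: jmap_def fun_eq_iff)

lemma seg_rev: "reversepath (seg n x y) = seg n y x"
  by (auto simp: reversepath_def seg_def fun_eq_iff algebra_simps)

lemma mid_cat: "mid n (\<lambda>t z. if t \<le> 1/2 then I (2*t) z else J (2*t-1) (\<phi> z)) P = mid n I P +++ mid n J (jmap n \<phi> P)"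
  by (auto simp: mid_def joinpaths_def jmap_def fun_eq_iff)

lemma mid_revcat: assumes "\<forall>i<n. g (\<phi> (P i)) = P i"
  shows "mid n (\<lambda>t z. if t \<le> 1/2 then I (1-2*t) (g z) else K (2*t-1) (g z)) (jmap n \<phi> P) = reversepath (mid n I P) +++ mid n K P"
  using assms by (auto simp: mid_def joinpaths_def jmap_def fun_eq_iff reversepath_def)

lemma combined:
  assumes bq: "base_points n q" and rp: "rel_homeo \<phi>" and rs: "rel_homeo \<psi>"
    and g1: "good n q \<phi> P" and g2: "good n q \<psi> (jmap n \<phi> P)"
    and I: "disk_isotopy I \<phi>" and J: "disk_isotopy J \<psi>"
  shows "homotopic_paths (Conf n) (braid_path n q P I \<phi> +++ braid_path n q (jmap n \<phi> P) J \<psi>)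
     (seg n (qv n q) P +++ ((mid n I P +++ mid n J (jmap n \<phi> P)) +++ seg n (jmap n (\<psi> \<circ> \<phi>) P) (qv n q)))"
proof -
  note p1 = good_pieces[OF bq I rp g1]
  note p2 = good_pieces[OF bq J rs g2]
  have e1: "seg n (qv n q) (jmap n \<phi> P) = reversepath (seg n (jmap n \<phi> P) (qv n q))" by (simp add: seg_rev)
  have e2: "jmap n \<psi> (jmap n \<phi> P) = jmap n (\<psi> \<circ> \<phi>) P" by (rule jmap_comp)
  have h1: "homotopic_paths (Conf n) (braid_path n q P I \<phi>) (seg n (qv n q) P +++ (mid n I P +++ seg n (jmap n \<phi> P) (qv n q)))"
    by (rule homotopic_paths_sym[OF bp_hom[OF bq I rp g1]])
  have h2: "homotopic_paths (Conf n) (braid_path n q (jmap n \<phi> P) J \<psi>)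
      (reversepath (seg n (jmap n \<phi> P) (qv n q)) +++ (mid n J (jmap n \<phi> P) +++ seg n (jmap n (\<psi> \<circ> \<phi>) P) (qv n q)))"
    using homotopic_paths_sym[OF bp_hom[OF bq J rs g2]] unfolding e1 e2 .
  have "homotopic_paths (Conf n) (braid_path n q P I \<phi> +++ braid_path n q (jmap n \<phi> P) J \<psi>)
     ((seg n (qv n q) P +++ (mid n I P +++ seg n (jmap n \<phi> P) (qv n q))) +++
      (reversepath (seg n (jmap n \<phi> P) (qv n q)) +++ (mid n J (jmap n \<phi> P) +++ seg n (jmap n (\<psi> \<circ> \<phi>) P) (qv n q))))"
  proof (rule homotopic_paths_join[OF h1 h2])
    have "pathfinish (braid_path n q P I \<phi>) = pathfinish (seg n (qv n q) P +++ (mid n I P +++ seg n (jmap n \<phi> P) (qv n q)))"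
      using homotopic_paths_imp_pathfinish[OF h1] .
    also have "\<dots> = qv n q" using p1 by simp
    also have "\<dots> = pathstart (braid_path n q (jmap n \<phi> P) J \<psi>)"
      using homotopic_paths_imp_pathstart[OF h2] p2 e1 by simp
    finally show "pathfinish (braid_path n q P I \<phi>) = pathstart (braid_path n q (jmap n \<phi> P) J \<psi>)" .
  qed
  also have "homotopic_paths (Conf n) \<dots>
     (seg n (qv n q) P +++ ((mid n I P +++ mid n J (jmap n \<phi> P)) +++ seg n (jmap n (\<psi> \<circ> \<phi>) P) (qv n q)))"
    by (rule key_hom) (use p1 p2 e2 in auto)
  finally show ?thesis .
qed


lemma bp_ends: "pathstart (braid_path n q P I \<phi>) = qv n q" "pathfinish (braid_path n q P I \<phi>) = qv n q"
  by (auto simp: pathstart_def pathfinish_def braid_path_def qv_def fun_eq_iff)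

lemma bp_path: assumes "base_points n q" "disk_isotopy I \<phi>" "rel_homeo \<phi>" "good n q \<phi> P"
  shows "path (braid_path n q P I \<phi>)" "path_image (braid_path n q P I \<phi>) \<subseteq> Conf n"
  using homotopic_paths_imp_path[OF bp_hom[OF assms]] homotopic_paths_imp_subset[OF bp_hom[OF assms]] by auto

lemma cocycle_good:
  assumes bq: "base_points n q" and rp: "rel_homeo \<phi>" and rs: "rel_homeo \<psi>"
    and g1: "good n q \<phi> P" and g2: "good n q \<psi> (jmap n \<phi> P)" and g3: "good n q (\<psi> \<circ> \<phi>) P"
  shows "beta n q P (\<psi> \<circ> \<phi>) = braid_mult n (beta n q P \<phi>) (beta n q (jmap n \<phi> P) \<psi>)"
proof
  have rc: "rel_homeo (\<psi> \<circ> \<phi>)" by (rule rh_comp[OF rs rp])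
  note b1 = beta_good[OF g1] and b2 = beta_good[OF g2] and b3 = beta_good[OF g3]
  have Pc: "\<forall>i<n. P i \<in> cball 0 1" using g1 unfolding good_def by auto
  show "braid_mult n (beta n q P \<phi>) (beta n q (jmap n \<phi> P) \<psi>) \<subseteq> beta n q P (\<psi> \<circ> \<phi>)"
  proof
    fix k assume "k \<in> braid_mult n (beta n q P \<phi>) (beta n q (jmap n \<phi> P) \<psi>)"
    then obtain a b where a: "a \<in> beta n q P \<phi>" and b: "b \<in> beta n q (jmap n \<phi> P) \<psi>"
      and k: "homotopic_paths (Conf n) k (a +++ b)" unfolding braid_mult_def by blast
    obtain I where I: "disk_isotopy I \<phi>" and Ia: "homotopic_paths (Conf n) (braid_path n q P I \<phi>) a"
      using a b1 by blast
    obtain J where J: "disk_isotopy J \<psi>" and Jb: "homotopic_paths (Conf n) (braid_path n q (jmap n \<phi> P) J \<psi>) b"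
      using b b2 by blast
    define K where "K = (\<lambda>t z. if t \<le> 1/2 then I (2*t) z else J (2*t-1) (\<phi> z))"
    have K: "disk_isotopy K (\<psi> \<circ> \<phi>)" unfolding K_def by (rule iso_concat[OF I J rp])
    have "homotopic_paths (Conf n) (braid_path n q P K (\<psi> \<circ> \<phi>))
        (seg n (qv n q) P +++ (mid n K P +++ seg n (jmap n (\<psi> \<circ> \<phi>) P) (qv n q)))"
      by (rule homotopic_paths_sym[OF bp_hom[OF bq K rc g3]])
    also have "seg n (qv n q) P +++ (mid n K P +++ seg n (jmap n (\<psi> \<circ> \<phi>) P) (qv n q)) =
       seg n (qv n q) P +++ ((mid n I P +++ mid n J (jmap n \<phi> P)) +++ seg n (jmap n (\<psi> \<circ> \<phi>) P) (qv n q))"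
      unfolding K_def mid_cat ..
    also have "homotopic_paths (Conf n) \<dots> (braid_path n q P I \<phi> +++ braid_path n q (jmap n \<phi> P) J \<psi>)"
      by (rule homotopic_paths_sym[OF combined[OF bq rp rs g1 g2 I J]])
    also have "homotopic_paths (Conf n) \<dots> (a +++ b)"
      by (rule homotopic_paths_join[OF Ia Jb]) (simp add: bp_ends)
    also have "homotopic_paths (Conf n) \<dots> k" by (rule homotopic_paths_sym[OF k])
    finally show "k \<in> beta n q P (\<psi> \<circ> \<phi>)" using b3 K by blast
  qed
  show "beta n q P (\<psi> \<circ> \<phi>) \<subseteq> braid_mult n (beta n q P \<phi>) (beta n q (jmap n \<phi> P) \<psi>)"
  proof
    fix h assume "h \<in> beta n q P (\<psi> \<circ> \<phi>)"
    then obtain K where K: "disk_isotopy K (\<psi> \<circ> \<phi>)" and Kh: "homotopic_paths (Conf n) (braid_path n q P K (\<psi> \<circ> \<phi>)) h"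
      using b3 by blast
    define I where "I = alex \<phi>"
    have I: "disk_isotopy I \<phi>" unfolding I_def by (rule alex_iso[OF rp])
    obtain g where g: "homeomorphism (cball 0 1) (cball 0 1) \<phi> g" using rh_homeo[OF rp] by blast
    define J where "J = (\<lambda>t z. if t \<le> 1/2 then I (1-2*t) (g z) else K (2*t-1) (g z))"
    have chi: "\<forall>z\<in>cball 0 1. (\<psi> \<circ> \<phi>) (g z) = \<psi> z" using homeomorphism_apply2[OF g] by simp
    have J: "disk_isotopy J \<psi>" unfolding J_def by (rule iso_revcat[OF I K rp g chi])
    have gp: "\<forall>i<n. g (\<phi> (P i)) = P i" using homeomorphism_apply1[OF g] Pc by blast
    have mJ: "mid n J (jmap n \<phi> P) = reversepath (mid n I P) +++ mid n K P"
      unfolding J_def by (rule mid_revcat[of n g \<phi> P, OF gp])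
    define a where "a = braid_path n q P I \<phi>"
    define b where "b = braid_path n q (jmap n \<phi> P) J \<psi>"
    have a: "a \<in> beta n q P \<phi>" using b1 I bp_path[OF bq I rp g1] unfolding a_def by auto
    have b: "b \<in> beta n q (jmap n \<phi> P) \<psi>" using b2 J bp_path[OF bq J rs g2] unfolding b_def by auto
    note p1 = good_pieces[OF bq I rp g1]
    note p3 = good_pieces[OF bq K rc g3]
    have "homotopic_paths (Conf n) (a +++ b)
       (seg n (qv n q) P +++ ((mid n I P +++ (reversepath (mid n I P) +++ mid n K P)) +++ seg n (jmap n (\<psi> \<circ> \<phi>) P) (qv n q)))"
      using combined[OF bq rp rs g1 g2 I J] unfolding a_def b_def mJ .
    also have "homotopic_paths (Conf n) \<dots> (seg n (qv n q) P +++ (mid n K P +++ seg n (jmap n (\<psi> \<circ> \<phi>) P) (qv n q)))"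
    proof (rule homotopic_paths_join)
      show "homotopic_paths (Conf n) (seg n (qv n q) P) (seg n (qv n q) P)" using p1 by simp
      show "homotopic_paths (Conf n) ((mid n I P +++ reversepath (mid n I P) +++ mid n K P) +++ seg n (jmap n (\<psi> \<circ> \<phi>) P) (qv n q))
          (mid n K P +++ seg n (jmap n (\<psi> \<circ> \<phi>) P) (qv n q))"
      proof (rule homotopic_paths_join)
        show "homotopic_paths (Conf n) (mid n I P +++ reversepath (mid n I P) +++ mid n K P) (mid n K P)"
          by (rule cancel_hom) (use p1 p3 in auto)
        show "homotopic_paths (Conf n) (seg n (jmap n (\<psi> \<circ> \<phi>) P) (qv n q)) (seg n (jmap n (\<psi> \<circ> \<phi>) P) (qv n q))"
          using p3 by simp
      qed (use p1 p3 in auto)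
    qed (use p1 p3 in auto)
    also have "homotopic_paths (Conf n) \<dots> (braid_path n q P K (\<psi> \<circ> \<phi>))" by (rule bp_hom[OF bq K rc g3])
    also have "homotopic_paths (Conf n) \<dots> h" by (rule Kh)
    finally have "homotopic_paths (Conf n) h (a +++ b)" by (rule homotopic_paths_sym)
    thus "h \<in> braid_mult n (beta n q P \<phi>) (beta n q (jmap n \<phi> P) \<psi>)"
      unfolding braid_mult_def using a b by blast
  qed
qed


lemma preserves_comp: assumes "preserves \<phi> M" "preserves \<psi> M" shows "preserves (\<psi> \<circ> \<phi>) M"
proof -
  have m1: "\<phi> \<in> measurable M M" and d1: "distr M M \<phi> = M" using assms(1) unfolding preserves_def by auto
  have m2: "\<psi> \<in> measurable M M" and d2: "distr M M \<psi> = M" using assms(2) unfolding preserves_def by auto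
  have "distr M M (\<psi> \<circ> \<phi>) = distr (distr M M \<phi>) M \<psi>" using distr_distr[OF m2 m1] by simp
  also have "\<dots> = M" using d1 d2 by simp
  finally show ?thesis unfolding preserves_def using measurable_comp[OF m1 m2] by simp
qed

lemma jmap_compose: "jmap n Ch = compose {..<n} Ch"
  by (auto simp: jmap_def compose_def fun_eq_iff)

lemma AE_jmap:
  assumes pr: "\<forall>i<n. prob_space (lam i)" and pres: "\<forall>i<n. preserves Ch (lam i)"
    and ae: "AE P in PiM {..<n} lam. Q P"
  shows "AE P in PiM {..<n} lam. Q (jmap n Ch P)"
proof -
  have m: "\<And>i. i \<in> {..<n} \<Longrightarrow> Ch \<in> measurable (lam i) (lam i)" using pres unfolding preserves_def by auto
  have d: "distr (PiM {..<n} lam) (PiM {..<n} lam) (compose {..<n} Ch) = PiM {..<n} (\<lambda>i. distr (lam i) (lam i) Ch)"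
    by (rule distr_PiM_finite_prob_space') (use pr m in auto)
  also have "\<dots> = PiM {..<n} lam"
    by (rule PiM_cong) (use pres in \<open>auto simp: preserves_def\<close>)
  finally have d': "distr (PiM {..<n} lam) (PiM {..<n} lam) (compose {..<n} Ch) = PiM {..<n} lam" .
  have mm: "compose {..<n} Ch \<in> measurable (PiM {..<n} lam) (PiM {..<n} lam)"
    unfolding compose_def by (rule measurable_restrict) (use m in \<open>auto intro: measurable_compose[OF measurable_component_singleton]\<close>)
  have "AE P in distr (PiM {..<n} lam) (PiM {..<n} lam) (compose {..<n} Ch). Q P" unfolding d' by (rule ae)
  from AE_distrD[OF mm this] show ?thesis by (simp add: jmap_compose)
qed

lemma ae_part:
  assumes bq: "base_points n q"
    and pr: "\<forall>i<n. prob_space (lam i)"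
    and ae: "AE P in PiM {..<n} lam. P \<in> Omega n q"
    and rp: "rel_homeo \<phi>" "\<forall>i<n. preserves \<phi> (lam i)"
    and rs: "rel_homeo \<psi>" "\<forall>i<n. preserves \<psi> (lam i)"
  shows "AE P in PiM {..<n} lam. (\<forall>i<n. P i \<in> ball 0 1) \<longrightarrow>
               beta n q P (\<psi> \<circ> \<phi>) = braid_mult n (beta n q P \<phi>) (beta n q (jmap n \<phi> P) \<psi>)"
proof -
  have pc: "\<forall>i<n. preserves (\<psi> \<circ> \<phi>) (lam i)" using rp(2) rs(2) preserves_comp by blast
  have a1: "AE P in PiM {..<n} lam. jmap n \<phi> P \<in> Omega n q" by (rule AE_jmap[OF pr rp(2) ae])
  have a2: "AE P in PiM {..<n} lam. jmap n (\<psi> \<circ> \<phi>) P \<in> Omega n q" by (rule AE_jmap[OF pr pc ae])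
  show ?thesis using ae a1 a2
  proof eventually_elim
    case (elim P)
    show ?case
    proof
      assume b: "\<forall>i<n. P i \<in> ball 0 1"
      have g1: "good n q \<phi> P" using elim b unfolding good_def by auto
      have g3: "good n q (\<psi> \<circ> \<phi>) P" using elim b unfolding good_def by auto
      have g2: "good n q \<psi> (jmap n \<phi> P)" using elim b rh_ball[OF rp(1)] unfolding good_def jmap_comp
        by (auto simp: jmap_def)
      show "beta n q P (\<psi> \<circ> \<phi>) = braid_mult n (beta n q P \<phi>) (beta n q (jmap n \<phi> P) \<psi>)"
        by (rule cocycle_good[OF bq rp(1) rs(1) g1 g2 g3])
    qed
  qed
qed


definition XX :: "nat \<Rightarrow> (nat \<Rightarrow> complex) set" where
  "XX n = PiE {..<n} (\<lambda>_. cball 0 1)"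

definition near :: "nat \<Rightarrow> (nat \<Rightarrow> complex) \<Rightarrow> ((nat \<Rightarrow> complex) \<Rightarrow> bool) \<Rightarrow> bool" where
  "near n P Q \<longleftrightarrow> (\<exists>e>0. \<forall>P'\<in>XX n. (\<forall>i<n. dist (P' i) (P i) < e) \<longrightarrow> Q P')"

lemma near_conj: "near n P Q1 \<Longrightarrow> near n P Q2 \<Longrightarrow> near n P (\<lambda>P'. Q1 P' \<and> Q2 P')"
  unfolding near_def
proof (elim exE conjE)
  fix e1 e2 :: real
  assume "e1 > 0" "e2 > 0" and h1: "\<forall>P'\<in>XX n. (\<forall>i<n. dist (P' i) (P i) < e1) \<longrightarrow> Q1 P'"
    and h2: "\<forall>P'\<in>XX n. (\<forall>i<n. dist (P' i) (P i) < e2) \<longrightarrow> Q2 P'"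
  show "\<exists>e>0. \<forall>P'\<in>XX n. (\<forall>i<n. dist (P' i) (P i) < e) \<longrightarrow> Q1 P' \<and> Q2 P'"
    by (rule exI[of _ "min e1 e2"]) (use \<open>e1 > 0\<close> \<open>e2 > 0\<close> h1 h2 in auto)
qed

lemma near_true: "near n P (\<lambda>_. True)"
  unfolding near_def by (rule exI[of _ 1]) auto

lemma near_all: "finite A \<Longrightarrow> (\<forall>a\<in>A. near n P (Q a)) \<Longrightarrow> near n P (\<lambda>P'. \<forall>a\<in>A. Q a P')"
proof (induction A rule: finite_induct)
  case empty thus ?case using near_true by simp
next
  case (insert x F)
  hence "near n P (\<lambda>P'. Q x P' \<and> (\<forall>a\<in>F. Q a P'))" by (intro near_conj) auto
  thus ?case by simp
qed

lemma near_mono: "near n P Q \<Longrightarrow> (\<And>P'. P' \<in> XX n \<Longrightarrow> Q P' \<Longrightarrow> R P') \<Longrightarrow> near n P R"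
  unfolding near_def by blast

lemma near_pt:
  assumes "continuous_on (cball 0 1) F" "P i \<in> cball 0 1" "m > 0" "i < n"
  shows "near n P (\<lambda>P'. dist (F (P' i)) (F (P i)) < m)"
proof -
  obtain d where d: "d > 0" "\<forall>z\<in>cball 0 1. dist z (P i) < d \<longrightarrow> dist (F z) (F (P i)) < m"
    using assms(1,2,3) unfolding continuous_on_iff by blast
  show ?thesis unfolding near_def
  proof (rule exI[of _ d], intro conjI ballI impI)
    show "d > 0" by fact
    fix P' assume "P' \<in> XX n" "\<forall>i<n. dist (P' i) (P i) < d"
    moreover hence "P' i \<in> cball 0 1" using assms(4) unfolding XX_def by auto
    ultimately show "dist (F (P' i)) (F (P i)) < m" using d assms(4) by auto
  qed
qed


lemma pair_stable:
  fixes x y :: complex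
  assumes "\<forall>s\<in>{0..1::real}. (1 - s) *\<^sub>R x + s *\<^sub>R y \<noteq> 0"
  shows "\<exists>m>0. \<forall>y'. dist y' y < m \<longrightarrow> (\<forall>s\<in>{0..1::real}. (1 - s) *\<^sub>R x + s *\<^sub>R y' \<noteq> 0)"
proof -
  have "\<exists>s0\<in>{0..1::real}. \<forall>s\<in>{0..1}. norm ((1 - s0) *\<^sub>R x + s0 *\<^sub>R y) \<le> norm ((1 - s) *\<^sub>R x + s *\<^sub>R y)"
    by (rule continuous_attains_inf) (auto intro!: continuous_intros)
  then obtain s0 where s0: "s0 \<in> {0..1}" "\<forall>s\<in>{0..1}. norm ((1 - s0) *\<^sub>R x + s0 *\<^sub>R y) \<le> norm ((1 - s) *\<^sub>R x + s *\<^sub>R y)"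
    by blast
  define m where "m = norm ((1 - s0) *\<^sub>R x + s0 *\<^sub>R y)"
  have "(1 - s0) *\<^sub>R x + s0 *\<^sub>R y \<noteq> 0" using assms s0(1) by blast
  hence m: "m > 0" unfolding m_def by simp
  show ?thesis
  proof (rule exI[of _ m], intro conjI allI impI ballI m)
    fix y' s assume y': "dist y' y < m" and s: "s \<in> {0..1::real}"
    have "(1 - s) *\<^sub>R x + s *\<^sub>R y' = ((1 - s) *\<^sub>R x + s *\<^sub>R y) + s *\<^sub>R (y' - y)" by (simp add: scaleR_diff_right)
    moreover have "norm (s *\<^sub>R (y' - y)) < m"
    proof -
      have "norm (s *\<^sub>R (y' - y)) = s * norm (y' - y)" using s by simp
      also have "\<dots> \<le> norm (y' - y)" using s by (simp add: mult_left_le_one_le)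
      also have "\<dots> < m" using y' by (simp add: dist_norm)
      finally show ?thesis .
    qed
    moreover have "m \<le> norm ((1 - s) *\<^sub>R x + s *\<^sub>R y)" using s0 s unfolding m_def by auto
    ultimately show "(1 - s) *\<^sub>R x + s *\<^sub>R y' \<noteq> 0"
    proof (intro notI)
      assume e: "(1 - s) *\<^sub>R x + s *\<^sub>R y' = (1 - s) *\<^sub>R x + s *\<^sub>R y + s *\<^sub>R (y' - y)"
        "norm (s *\<^sub>R (y' - y)) < m" "m \<le> norm ((1 - s) *\<^sub>R x + s *\<^sub>R y)"
        "(1 - s) *\<^sub>R x + s *\<^sub>R y' = 0"
      have z: "(1 - s) *\<^sub>R x + s *\<^sub>R y + s *\<^sub>R (y' - y) = 0" using e(1) e(4) by simp
      have "norm ((1 - s) *\<^sub>R x + s *\<^sub>R y) - norm (- (s *\<^sub>R (y' - y))) \<le> norm (((1 - s) *\<^sub>R x + s *\<^sub>R y) - - (s *\<^sub>R (y' - y)))"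
        by (rule norm_triangle_ineq2)
      hence "norm ((1 - s) *\<^sub>R x + s *\<^sub>R y) \<le> norm (s *\<^sub>R (y' - y))"
        unfolding diff_minus_eq_add z norm_minus_cancel by simp
      thus False using e(2,3) by linarith
    qed
  qed
qed


lemma lin_neq: "((1 - s) *\<^sub>R a + s *\<^sub>R b \<noteq> (1 - s) *\<^sub>R c + s *\<^sub>R d) \<longleftrightarrow>
   (1 - s) *\<^sub>R (a - c) + s *\<^sub>R (b - d) \<noteq> (0::complex)"
proof -
  have "(1 - s) *\<^sub>R a + s *\<^sub>R b - ((1 - s) *\<^sub>R c + s *\<^sub>R d) = (1 - s) *\<^sub>R (a - c) + s *\<^sub>R (b - d)"
    by (simp add: scaleR_diff_right)
  thus ?thesis by (metis eq_iff_diff_eq_0)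
qed


lemma XX_mem: "P \<in> XX n \<Longrightarrow> k < n \<Longrightarrow> P k \<in> cball 0 1"
  unfolding XX_def by (simp add: PiE_iff)

definition OmF :: "nat \<Rightarrow> (nat \<Rightarrow> complex) \<Rightarrow> (complex \<Rightarrow> complex) \<Rightarrow> (nat \<Rightarrow> complex) \<Rightarrow> bool" where
  "OmF n q F P \<longleftrightarrow> (\<forall>i<n. \<forall>j<n. i \<noteq> j \<longrightarrow>
        (\<forall>s\<in>{0..1::real}. (1 - s) *\<^sub>R q i + s *\<^sub>R F (P i) \<noteq> (1 - s) *\<^sub>R q j + s *\<^sub>R F (P j)))"

lemma OmF_near:
  assumes F: "continuous_on (cball 0 1) F" and P: "P \<in> XX n" and O: "OmF n q F P"
  shows "near n P (OmF n q F)"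
proof -
  have "near n P (\<lambda>P'. \<forall>ij\<in>{..<n} \<times> {..<n}. fst ij \<noteq> snd ij \<longrightarrow>
        (\<forall>s\<in>{0..1::real}. (1 - s) *\<^sub>R q (fst ij) + s *\<^sub>R F (P' (fst ij)) \<noteq> (1 - s) *\<^sub>R q (snd ij) + s *\<^sub>R F (P' (snd ij))))"
  proof (rule near_all, simp, rule ballI)
    fix ij assume ij: "ij \<in> {..<n} \<times> {..<n}"
    obtain i j where ijd: "ij = (i, j)" "i < n" "j < n" using ij by auto
    show "near n P (\<lambda>P'. fst ij \<noteq> snd ij \<longrightarrow>
        (\<forall>s\<in>{0..1::real}. (1 - s) *\<^sub>R q (fst ij) + s *\<^sub>R F (P' (fst ij)) \<noteq> (1 - s) *\<^sub>R q (snd ij) + s *\<^sub>R F (P' (snd ij))))"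
    proof (cases "i = j")
      case True thus ?thesis using ijd near_true[of n P] by (simp add: near_def)
    next
      case False
      have o1: "\<forall>s\<in>{0..1::real}. (1 - s) *\<^sub>R q i + s *\<^sub>R F (P i) \<noteq> (1 - s) *\<^sub>R q j + s *\<^sub>R F (P j)"
        using O ijd(2,3) False unfolding OmF_def by simp
      have o2: "\<forall>s\<in>{0..1::real}. (1 - s) *\<^sub>R (q i - q j) + s *\<^sub>R (F (P i) - F (P j)) \<noteq> 0"
        using o1 unfolding lin_neq .
      obtain m where m: "m > 0" "\<forall>y'. dist y' (F (P i) - F (P j)) < m \<longrightarrow>
           (\<forall>s\<in>{0..1::real}. (1 - s) *\<^sub>R (q i - q j) + s *\<^sub>R y' \<noteq> 0)"
        using pair_stable[OF o2] by blast
      have Pi: "P i \<in> cball 0 1" "P j \<in> cball 0 1" using XX_mem[OF P ijd(2)] XX_mem[OF P ijd(3)] by auto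
      have "near n P (\<lambda>P'. dist (F (P' i)) (F (P i)) < m/2 \<and> dist (F (P' j)) (F (P j)) < m/2)"
        by (rule near_conj; rule near_pt[OF F]) (use Pi m ijd in auto)
      thus ?thesis
      proof (rule near_mono)
        fix P' assume d: "dist (F (P' i)) (F (P i)) < m/2 \<and> dist (F (P' j)) (F (P j)) < m/2"
        have "dist (F (P' i) - F (P' j)) (F (P i) - F (P j)) = norm ((F (P' i) - F (P i)) - (F (P' j) - F (P j)))"
          by (simp add: dist_norm algebra_simps)
        also have "\<dots> \<le> norm (F (P' i) - F (P i)) + norm (F (P' j) - F (P j))" by (rule norm_triangle_ineq4)
        also have "\<dots> = dist (F (P' i)) (F (P i)) + dist (F (P' j)) (F (P j))" by (simp add: dist_norm)
        finally have "dist (F (P' i) - F (P' j)) (F (P i) - F (P j)) \<le> dist (F (P' i)) (F (P i)) + dist (F (P' j)) (F (P j))" .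
        hence "dist (F (P' i) - F (P' j)) (F (P i) - F (P j)) < m" using d by linarith
        hence "\<forall>s\<in>{0..1::real}. (1 - s) *\<^sub>R (q i - q j) + s *\<^sub>R (F (P' i) - F (P' j)) \<noteq> 0" using m(2) by simp
        thus "fst ij \<noteq> snd ij \<longrightarrow>
            (\<forall>s\<in>{0..1::real}. (1 - s) *\<^sub>R q (fst ij) + s *\<^sub>R F (P' (fst ij)) \<noteq> (1 - s) *\<^sub>R q (snd ij) + s *\<^sub>R F (P' (snd ij)))"
          using ijd unfolding lin_neq by simp
      qed
    qed
  qed
  thus ?thesis
  proof (rule near_mono)
    fix P' assume h: "\<forall>ij\<in>{..<n} \<times> {..<n}. fst ij \<noteq> snd ij \<longrightarrow>
        (\<forall>s\<in>{0..1::real}. (1 - s) *\<^sub>R q (fst ij) + s *\<^sub>R F (P' (fst ij)) \<noteq> (1 - s) *\<^sub>R q (snd ij) + s *\<^sub>R F (P' (snd ij)))"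
    show "OmF n q F P'" unfolding OmF_def
    proof (intro allI impI)
      fix i j assume ij: "i < n" "j < n" "i \<noteq> j"
      hence "(i, j) \<in> {..<n} \<times> {..<n}" by simp
      from h[rule_format, OF this] ij(3)
      show "\<forall>s\<in>{0..1::real}. (1 - s) *\<^sub>R q i + s *\<^sub>R F (P' i) \<noteq> (1 - s) *\<^sub>R q j + s *\<^sub>R F (P' j)"
        by simp
    qed
  qed
qed


lemma Omega_iff: "P \<in> Omega n q \<longleftrightarrow> P \<in> XX n \<and> OmF n q id P"
  by (simp add: Omega_def XX_def OmF_def)

lemma jmap_XX: assumes "P \<in> XX n" "rel_homeo \<phi>" shows "jmap n \<phi> P \<in> XX n"
proof -
  have "\<forall>k<n. \<phi> (P k) \<in> cball 0 1" using XX_mem[OF assms(1)] rh_cball[OF assms(2)] by blast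
  thus ?thesis unfolding XX_def jmap_def by (simp add: PiE_iff extensional_def)
qed

lemma jOmega_iff: assumes "P \<in> XX n" "rel_homeo \<phi>"
  shows "jmap n \<phi> P \<in> Omega n q \<longleftrightarrow> OmF n q \<phi> P"
proof -
  have "jmap n \<phi> P \<in> Omega n q \<longleftrightarrow> OmF n q id (jmap n \<phi> P)" using Omega_iff jmap_XX[OF assms] by blast
  also have "\<dots> \<longleftrightarrow> OmF n q \<phi> P" unfolding OmF_def jmap_def by simp
  finally show ?thesis .
qed

lemma ball_near: assumes "P \<in> XX n" "\<forall>i<n. P i \<in> ball 0 1" shows "near n P (\<lambda>P'. \<forall>i<n. P' i \<in> ball 0 1)"
proof -
  have "near n P (\<lambda>P'. \<forall>i\<in>{..<n}. P' i \<in> ball 0 1)"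
  proof (rule near_all, simp, rule ballI)
    fix i assume i: "i \<in> {..<n}"
    have Pi: "P i \<in> ball 0 1" using assms(2) i by simp
    have "near n P (\<lambda>P'. dist (id (P' i)) (id (P i)) < 1 - norm (P i))"
      by (rule near_pt) (use Pi i XX_mem[OF assms(1)] in auto)
    thus "near n P (\<lambda>P'. P' i \<in> ball 0 1)"
    proof (rule near_mono)
      fix P' assume "dist (id (P' i)) (id (P i)) < 1 - norm (P i)"
      hence "norm (P' i) < 1" using norm_triangle_ineq2[of "P' i" "P i"] by (simp add: dist_norm)
      thus "P' i \<in> ball 0 1" by simp
    qed
  qed
  thus ?thesis by (simp add: lessThan_iff[symmetric] del: lessThan_iff) (metis lessThan_iff)
qed

lemma good_near: assumes rh: "rel_homeo \<phi>" and P: "P \<in> XX n" and g: "good n q \<phi> P"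
  shows "near n P (good n q \<phi>)"
proof -
  have o1: "OmF n q id P" using g Omega_iff unfolding good_def by blast
  have o2: "OmF n q \<phi> P" using g jOmega_iff[OF P rh] unfolding good_def by blast
  have b: "\<forall>i<n. P i \<in> ball 0 1" using g unfolding good_def by blast
  have n1: "near n P (OmF n q id)" by (rule OmF_near[OF _ P o1]) (simp add: continuous_on_id)
  have n2: "near n P (OmF n q \<phi>)" by (rule OmF_near[OF rh_cont[OF rh] P o2])
  have n3: "near n P (\<lambda>P'. \<forall>i<n. P' i \<in> ball 0 1)" by (rule ball_near[OF P b])
  have "near n P (\<lambda>P'. OmF n q id P' \<and> OmF n q \<phi> P' \<and> (\<forall>i<n. P' i \<in> ball 0 1))"
    by (intro near_conj n1 n2 n3)
  thus ?thesis
  proof (rule near_mono)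
    fix P' assume P': "P' \<in> XX n" and h: "OmF n q id P' \<and> OmF n q \<phi> P' \<and> (\<forall>i<n. P' i \<in> ball 0 1)"
    show "good n q \<phi> P'" unfolding good_def using h P' Omega_iff jOmega_iff[OF P' rh] by blast
  qed
qed


definition lin :: "nat \<Rightarrow> (nat \<Rightarrow> complex) \<Rightarrow> (nat \<Rightarrow> complex) \<Rightarrow> real \<Rightarrow> nat \<Rightarrow> complex" where
  "lin n P P' s = (\<lambda>i. if i < n then (1 - s) *\<^sub>R P i + s *\<^sub>R P' i else undefined)"

lemma XX_ext: "P \<in> XX n \<Longrightarrow> \<not> k < n \<Longrightarrow> P k = undefined"
  unfolding XX_def by (simp add: PiE_iff extensional_def)

lemma lin0: "P \<in> XX n \<Longrightarrow> lin n P P' 0 = P"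
  by (auto simp: lin_def fun_eq_iff XX_ext)

lemma lin1: "P' \<in> XX n \<Longrightarrow> lin n P P' 1 = P'"
  by (auto simp: lin_def fun_eq_iff XX_ext)

lemma cont_iso_comp2:
  assumes c: "continuous_on ({0..1} \<times> cball 0 1) (\<lambda>(t, z). I t z)" and a: "continuous_on T a"
    and ar: "\<forall>x\<in>T. a x \<in> {0..1}" and b: "continuous_on T b" and br: "\<forall>x\<in>T. b x \<in> cball (0::complex) 1"
  shows "continuous_on T (\<lambda>x. I (a x) (b x))"
proof -
  have "continuous_on T (\<lambda>x. (\<lambda>(t, z). I t z) (a x, b x))"
    by (rule continuous_on_compose2[OF c]) (use a b ar br in \<open>auto intro!: continuous_intros\<close>)
  thus ?thesis by simp
qed

lemma cball_comb: "a \<in> cball (0::complex) 1 \<Longrightarrow> b \<in> cball 0 1 \<Longrightarrow> s \<in> {0..1::real} \<Longrightarrow> (1 - s) *\<^sub>R a + s *\<^sub>R b \<in> cball 0 1"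
  by (rule convexD[OF convex_cball]) auto

lemma bp_hom_lin:
  assumes bq: "base_points n q" and rh: "rel_homeo \<phi>" and I: "disk_isotopy I \<phi>"
    and P: "P \<in> XX n" and P': "P' \<in> XX n" and g: "\<forall>s\<in>{0..1}. good n q \<phi> (lin n P P' s)"
  shows "homotopic_paths (Conf n) (braid_path n q P I \<phi>) (braid_path n q P' I \<phi>)"
  unfolding homotopic_paths
proof (rule exI[of _ "\<lambda>x. braid_path n q (lin n P P' (fst x)) I \<phi> (snd x)"], intro conjI ballI)
  define S where "S = {0..1::real} \<times> {0..1::real}"
  have cI: "continuous_on ({0..1} \<times> cball 0 1) (\<lambda>(t, z). I t z)" using I unfolding disk_isotopy_def by blast
  have "continuous_on S (\<lambda>x. braid_path n q (lin n P P' (fst x)) I \<phi> (snd x))"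
    unfolding braid_path_def
  proof (rule cont_fun)
    fix i assume i: "i < n"
    define L where "L = (\<lambda>x::real\<times>real. (1 - fst x) *\<^sub>R P i + fst x *\<^sub>R P' i)"
    have Lc: "continuous_on S L" unfolding L_def by (intro continuous_intros)
    have Lr: "\<forall>x\<in>S. L x \<in> cball 0 1" unfolding L_def S_def
      using XX_mem[OF P i] XX_mem[OF P' i] cball_comb by auto
    have "continuous_on S (\<lambda>x. if snd x \<le> 1/3 then (1 - 3 * snd x) *\<^sub>R q i + (3 * snd x) *\<^sub>R L x
        else if snd x \<le> 2/3 then I (3 * snd x - 1) (L x)
        else (1 - (3 * snd x - 2)) *\<^sub>R \<phi> (L x) + (3 * snd x - 2) *\<^sub>R q i)"
    proof (rule continuous_on_cases_le)
      show "continuous_on {x \<in> S. snd x \<le> 1/3} (\<lambda>x. (1 - 3 * snd x) *\<^sub>R q i + (3 * snd x) *\<^sub>R L x)"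
        by (intro continuous_intros continuous_on_subset[OF Lc]) auto
      show "continuous_on {x \<in> S. 1/3 \<le> snd x} (\<lambda>x. if snd x \<le> 2/3 then I (3 * snd x - 1) (L x)
        else (1 - (3 * snd x - 2)) *\<^sub>R \<phi> (L x) + (3 * snd x - 2) *\<^sub>R q i)"
      proof (rule continuous_on_cases_le)
        show "continuous_on {x \<in> {x \<in> S. 1/3 \<le> snd x}. snd x \<le> 2/3} (\<lambda>x. I (3 * snd x - 1) (L x))"
          by (rule cont_iso_comp2[OF cI]) (use Lr in \<open>auto intro!: continuous_intros continuous_on_subset[OF Lc] simp: S_def\<close>)
        show "continuous_on {x \<in> {x \<in> S. 1/3 \<le> snd x}. 2/3 \<le> snd x} (\<lambda>x. (1 - (3 * snd x - 2)) *\<^sub>R \<phi> (L x) + (3 * snd x - 2) *\<^sub>R q i)"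
          by (intro continuous_intros continuous_on_compose2[OF rh_cont[OF rh]] continuous_on_subset[OF Lc])
             (use Lr in auto)
        show "continuous_on {x \<in> S. 1/3 \<le> snd x} snd" by (intro continuous_intros)
        show "I (3 * snd x - 1) (L x) = (1 - (3 * snd x - 2)) *\<^sub>R \<phi> (L x) + (3 * snd x - 2) *\<^sub>R q i"
          if "x \<in> {x \<in> S. 1/3 \<le> snd x}" "snd x = 2/3" for x
        proof -
          have "L x \<in> cball 0 1" using Lr that by auto
          moreover have "3 * snd x - 1 = 1" "3 * snd x - 2 = 0" using that by auto
          ultimately show ?thesis using I unfolding disk_isotopy_def by simp
        qed
      qed
      show "continuous_on S snd" by (intro continuous_intros)
      show "(1 - 3 * snd x) *\<^sub>R q i + (3 * snd x) *\<^sub>R L x = (if snd x \<le> 2/3 then I (3 * snd x - 1) (L x)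
        else (1 - (3 * snd x - 2)) *\<^sub>R \<phi> (L x) + (3 * snd x - 2) *\<^sub>R q i)" if "x \<in> S" "snd x = 1/3" for x
      proof -
        have "L x \<in> cball 0 1" using Lr that by auto
        moreover have "3 * snd x - 1 = 0" "3 * snd x = 1" "snd x \<le> 2/3" using that by auto
        ultimately show ?thesis using I unfolding disk_isotopy_def by simp
      qed
    qed
    moreover have "(\<lambda>x. if snd x \<le> 1/3 then (1 - 3 * snd x) *\<^sub>R q i + (3 * snd x) *\<^sub>R L x
        else if snd x \<le> 2/3 then I (3 * snd x - 1) (L x)
        else (1 - (3 * snd x - 2)) *\<^sub>R \<phi> (L x) + (3 * snd x - 2) *\<^sub>R q i) =
      (\<lambda>x. if snd x \<le> 1/3 then (1 - 3 * snd x) *\<^sub>R q i + (3 * snd x) *\<^sub>R lin n P P' (fst x) i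
        else if snd x \<le> 2/3 then I (3 * snd x - 1) (lin n P P' (fst x) i)
        else (1 - (3 * snd x - 2)) *\<^sub>R \<phi> (lin n P P' (fst x) i) + (3 * snd x - 2) *\<^sub>R q i)"
    proof -
      have li: "\<And>x. lin n P P' (fst x) i = L x" using i by (simp add: lin_def L_def)
      show ?thesis by (simp only: li)
    qed
    ultimately show "continuous_on S (\<lambda>x. if snd x \<le> 1/3 then (1 - 3 * snd x) *\<^sub>R q i + (3 * snd x) *\<^sub>R lin n P P' (fst x) i
        else if snd x \<le> 2/3 then I (3 * snd x - 1) (lin n P P' (fst x) i)
        else (1 - (3 * snd x - 2)) *\<^sub>R \<phi> (lin n P P' (fst x) i) + (3 * snd x - 2) *\<^sub>R q i)" by metis
  qed
  thus "continuous_on ({0..1} \<times> {0..1}) (\<lambda>x. braid_path n q (lin n P P' (fst x)) I \<phi> (snd x))"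
    unfolding S_def .
  show "(\<lambda>x. braid_path n q (lin n P P' (fst x)) I \<phi> (snd x)) \<in> {0..1} \<times> {0..1} \<rightarrow> Conf n"
  proof
    fix x :: "real \<times> real" assume x: "x \<in> {0..1} \<times> {0..1}"
    have "fst x \<in> {0..1}" using x by auto
    hence "good n q \<phi> (lin n P P' (fst x))" using g by blast
    hence "path_image (braid_path n q (lin n P P' (fst x)) I \<phi>) \<subseteq> Conf n"
      by (rule bp_path(2)[OF bq I rh])
    thus "braid_path n q (lin n P P' (fst x)) I \<phi> (snd x) \<in> Conf n"
      using x unfolding path_image_def by auto
  qed
  show "braid_path n q (lin n P P' (fst (0, x))) I \<phi> (snd (0, x)) = braid_path n q P I \<phi> x" for x
    using lin0[OF P] by simp
  show "braid_path n q (lin n P P' (fst (1, x))) I \<phi> (snd (1, x)) = braid_path n q P' I \<phi> x" for x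
    using lin1[OF P'] by simp
  fix t :: real
  show "pathstart ((\<lambda>x. braid_path n q (lin n P P' (fst x)) I \<phi> (snd x)) \<circ> Pair t) = pathstart (braid_path n q P I \<phi>)"
    using bp_ends(1)[of n q] by (simp add: pathstart_def o_def)
  show "pathfinish ((\<lambda>x. braid_path n q (lin n P P' (fst x)) I \<phi> (snd x)) \<circ> Pair t) = pathfinish (braid_path n q P I \<phi>)"
    using bp_ends(2)[of n q] by (simp add: pathfinish_def o_def)
qed


lemma beta_const:
  assumes bq: "base_points n q" and rh: "rel_homeo \<phi>"
    and P: "P \<in> XX n" and P': "P' \<in> XX n" and g: "\<forall>s\<in>{0..1}. good n q \<phi> (lin n P P' s)"
  shows "beta n q P \<phi> = beta n q P' \<phi>"
proof -
  have gP: "good n q \<phi> P" using g lin0[OF P] by (metis atLeastAtMost_iff order_refl zero_le_one)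
  have gP': "good n q \<phi> P'" using g lin1[OF P'] by (metis atLeastAtMost_iff order_refl zero_le_one)
  have H: "homotopic_paths (Conf n) (braid_path n q P I \<phi>) (braid_path n q P' I \<phi>)" if "disk_isotopy I \<phi>" for I
    by (rule bp_hom_lin[OF bq rh that P P' g])
  show ?thesis unfolding beta_good[OF gP] beta_good[OF gP']
  proof (intro Collect_cong iffI; elim exE conjE)
    fix h I assume I: "disk_isotopy I \<phi>" and h: "homotopic_paths (Conf n) (braid_path n q P I \<phi>) h"
    show "\<exists>I. disk_isotopy I \<phi> \<and> homotopic_paths (Conf n) (braid_path n q P' I \<phi>) h"
      using I homotopic_paths_trans[OF homotopic_paths_sym[OF H[OF I]] h] by blast
  next
    fix h I assume I: "disk_isotopy I \<phi>" and h: "homotopic_paths (Conf n) (braid_path n q P' I \<phi>) h"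
    show "\<exists>I. disk_isotopy I \<phi> \<and> homotopic_paths (Conf n) (braid_path n q P I \<phi>) h"
      using I homotopic_paths_trans[OF H[OF I] h] by blast
  qed
qed

definition pbox :: "nat \<Rightarrow> (nat \<Rightarrow> complex) \<Rightarrow> real \<Rightarrow> (nat \<Rightarrow> complex) set" where
  "pbox n c r = PiE {..<n} (\<lambda>i. ball (c i) r \<inter> cball 0 1)"

lemma box_XX: "pbox n c r \<subseteq> XX n"
  unfolding pbox_def XX_def by (rule PiE_mono) auto

lemma box_lin: assumes "P \<in> pbox n c r" "P' \<in> pbox n c r" "s \<in> {0..1}" shows "lin n P P' s \<in> pbox n c r"
proof -
  have "\<forall>i<n. (1 - s) *\<^sub>R P i + s *\<^sub>R P' i \<in> ball (c i) r \<inter> cball 0 1"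
  proof (intro allI impI)
    fix i assume i: "i < n"
    have "P i \<in> ball (c i) r \<inter> cball 0 1" "P' i \<in> ball (c i) r \<inter> cball 0 1"
      using assms(1,2) i unfolding pbox_def by (auto simp: PiE_iff)
    thus "(1 - s) *\<^sub>R P i + s *\<^sub>R P' i \<in> ball (c i) r \<inter> cball 0 1"
      by (intro convexD[OF convex_Int[OF convex_ball convex_cball]]) (use assms(3) in auto)
  qed
  thus ?thesis unfolding pbox_def lin_def by (simp add: PiE_iff extensional_def)
qed

lemma beta_nogood: "\<not> good n q \<phi> P \<Longrightarrow> beta n q P \<phi> = {}"
  unfolding beta_def good_def by auto

lemma cover:
  assumes rh: "rel_homeo \<phi>" and P: "P \<in> XX n" and g: "good n q \<phi> P"
    and Dn: "\<forall>X. open X \<longrightarrow> X \<noteq> {} \<longrightarrow> (\<exists>d\<in>Dn. d \<in> X)"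
  shows "\<exists>c\<in>PiE {..<n} (\<lambda>_. Dn). \<exists>r\<in>\<rat> \<inter> {0<..}. P \<in> pbox n c r \<and> pbox n c r \<subseteq> {P'\<in>XX n. good n q \<phi> P'}"
proof -
  obtain e where e: "e > 0" "\<forall>P'\<in>XX n. (\<forall>i<n. dist (P' i) (P i) < e) \<longrightarrow> good n q \<phi> P'"
    using good_near[OF rh P g] unfolding near_def by blast
  have "\<forall>i\<in>{..<n}. \<exists>d. d \<in> Dn \<and> dist d (P i) < e/4"
  proof
    fix i
    have "ball (P i) (e/4) \<noteq> {}" using e(1) by simp
    then obtain d where "d \<in> Dn" "d \<in> ball (P i) (e/4)" using Dn[rule_format, of "ball (P i) (e/4)"] by auto
    thus "\<exists>d. d \<in> Dn \<and> dist d (P i) < e/4" by (auto simp: dist_commute)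
  qed
  then obtain c0 where c0: "\<forall>i\<in>{..<n}. c0 i \<in> Dn \<and> dist (c0 i) (P i) < e/4" by (metis bchoice)
  define c where "c = restrict c0 {..<n}"
  have c: "c \<in> PiE {..<n} (\<lambda>_. Dn)" using c0 unfolding c_def by auto
  have cd: "\<forall>i<n. dist (c i) (P i) < e/4" using c0 unfolding c_def by auto
  obtain r where r: "r \<in> \<rat>" "e/4 < r" "r < e/2" using Rats_dense_in_real[of "e/4" "e/2"] e(1) by auto
  have r0: "r \<in> \<rat> \<inter> {0<..}" using r e(1) by auto
  have Pb: "P \<in> pbox n c r"
  proof -
    have "\<forall>i<n. P i \<in> ball (c i) r \<inter> cball 0 1" using cd r XX_mem[OF P] by auto
    moreover have "\<forall>i. \<not> i < n \<longrightarrow> P i = undefined" using XX_ext[OF P] by blast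
    ultimately show ?thesis unfolding pbox_def by (auto simp: PiE_iff extensional_def)
  qed
  have bs: "pbox n c r \<subseteq> {P'\<in>XX n. good n q \<phi> P'}"
  proof
    fix P' assume P': "P' \<in> pbox n c r"
    have P'X: "P' \<in> XX n" using P' box_XX by blast
    have "\<forall>i<n. dist (P' i) (P i) < e"
    proof (intro allI impI)
      fix i assume i: "i < n"
      have "dist (c i) (P' i) < r" using P' i unfolding pbox_def by (auto simp: PiE_iff)
      hence "dist (P' i) (P i) \<le> dist (P' i) (c i) + dist (c i) (P i)" by (rule_tac dist_triangle)
      moreover have "dist (c i) (P i) < e/4" using cd i by blast
      moreover have "dist (P' i) (c i) < r" using \<open>dist (c i) (P' i) < r\<close> by (simp add: dist_commute)
      ultimately show "dist (P' i) (P i) < e" using r(3) e(1) by linarith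
    qed
    thus "P' \<in> {P'\<in>XX n. good n q \<phi> P'}" using e(2) P'X by blast
  qed
  show ?thesis using c r0 Pb bs by blast
qed


lemma meas_beta:
  assumes bq: "base_points n q" and rh: "rel_homeo \<phi>"
    and sl: "\<forall>i<n. sets (lam i) = sets (restrict_space borel (cball (0::complex) 1))"
  shows "(\<lambda>P. beta n q P \<phi>) \<in> measurable (PiM {..<n} lam) (count_space UNIV)"
proof -
  define M where "M = PiM {..<n} lam"
  have spl: "space (lam i) = cball 0 1" if "i < n" for i
    using sets_eq_imp_space_eq[OF sl[rule_format, OF that]] by (simp add: space_restrict_space)
  have spM: "space M = XX n" unfolding M_def space_PiM XX_def using spl by (intro PiE_cong) auto
  have boxM: "pbox n c r \<in> sets M" for c r
    unfolding M_def pbox_def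
  proof (rule sets_PiM_I_finite)
    fix i assume i: "i \<in> {..<n}"
    have "ball (c i) r \<inter> cball 0 1 = cball 0 1 \<inter> ball (c i) r" by blast
    also have "\<dots> \<in> sets (restrict_space borel (cball 0 1))" unfolding sets_restrict_space by (rule imageI) (rule borel_open, simp)
    finally show "ball (c i) r \<inter> cball 0 1 \<in> sets (lam i)" using sl i by simp
  qed simp
  obtain Dn :: "complex set" where Dn0: "countable Dn" "\<And>X. open X \<Longrightarrow> X \<noteq> {} \<Longrightarrow> \<exists>d\<in>Dn. d \<in> X"
    by (rule countable_dense_setE) blast
  have Dn: "countable Dn" "\<forall>X. open X \<longrightarrow> X \<noteq> {} \<longrightarrow> (\<exists>d\<in>Dn. d \<in> X)" using Dn0 by auto
  define CI where "CI = PiE {..<n} (\<lambda>_. Dn) \<times> (\<rat> \<inter> {0<..} :: real set)"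
  have cCI: "countable CI" unfolding CI_def
    by (intro countable_SIGMA countable_PiE countable_subset[OF _ countable_rat] Dn(1)) auto
  define GD where "GD = {P \<in> XX n. good n q \<phi> P}"
  define U where "U = (\<lambda>A. \<Union>cr\<in>CI. (if pbox n (fst cr) (snd cr) \<subseteq> GD \<and> (\<forall>P'\<in>pbox n (fst cr) (snd cr). beta n q P' \<phi> \<in> A)
          then pbox n (fst cr) (snd cr) else {}))"
  have UM: "U A \<in> sets M" for A
    unfolding U_def by (rule sets.countable_UN''[OF cCI]) (simp add: boxM)
  have Ueq: "U A = {P \<in> GD. beta n q P \<phi> \<in> A}" for A
  proof
    show "U A \<subseteq> {P \<in> GD. beta n q P \<phi> \<in> A}"
      unfolding U_def by (auto split: if_splits)
    show "{P \<in> GD. beta n q P \<phi> \<in> A} \<subseteq> U A"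
    proof
      fix P assume P: "P \<in> {P \<in> GD. beta n q P \<phi> \<in> A}"
      hence PX: "P \<in> XX n" and gP: "good n q \<phi> P" and bA: "beta n q P \<phi> \<in> A" unfolding GD_def by auto
      obtain c r where c: "c \<in> PiE {..<n} (\<lambda>_. Dn)" and r: "r \<in> \<rat> \<inter> {0<..}"
        and Pb: "P \<in> pbox n c r" and bs: "pbox n c r \<subseteq> GD"
        using cover[OF rh PX gP Dn(2)] unfolding GD_def by blast
      have "\<forall>P'\<in>pbox n c r. beta n q P' \<phi> \<in> A"
      proof
        fix P' assume P': "P' \<in> pbox n c r"
        have "\<forall>s\<in>{0..1}. good n q \<phi> (lin n P P' s)" using box_lin[OF Pb P'] bs unfolding GD_def by blast
        moreover have P'X: "P' \<in> XX n" using P' box_XX by blast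
        ultimately have "beta n q P \<phi> = beta n q P' \<phi>"
          using beta_const[OF bq rh PX P'X] by blast
        thus "beta n q P' \<phi> \<in> A" using bA by simp
      qed
      hence "P \<in> (if pbox n c r \<subseteq> GD \<and> (\<forall>P'\<in>pbox n c r. beta n q P' \<phi> \<in> A) then pbox n c r else {})"
        using Pb bs by simp
      moreover have "(c, r) \<in> CI" using c r unfolding CI_def by simp
      ultimately show "P \<in> U A" unfolding U_def
        by (intro UN_I[of "(c, r)"]) (simp_all only: fst_conv snd_conv)
    qed
  qed
  have GDM: "GD \<in> sets M"
  proof -
    have "GD = U UNIV" unfolding Ueq GD_def by simp
    thus ?thesis using UM by simp
  qed
  show ?thesis unfolding M_def[symmetric]
  proof (rule measurableI)
    fix A :: "(real \<Rightarrow> nat \<Rightarrow> complex) set set"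
    have "(\<lambda>P. beta n q P \<phi>) -` A \<inter> space M = U A \<union> (if {} \<in> A then space M - GD else {})"
    proof -
      have "P \<in> space M \<Longrightarrow> P \<notin> GD \<Longrightarrow> beta n q P \<phi> = {}" for P
        using beta_nogood spM unfolding GD_def by blast
      moreover have "GD \<subseteq> space M" using spM unfolding GD_def by blast
      ultimately show ?thesis unfolding Ueq by auto metis
    qed
    also have "\<dots> \<in> sets M" using UM GDM by auto
    finally show "(\<lambda>P. beta n q P \<phi>) -` A \<inter> space M \<in> sets M" .
  qed simp
qed


theorem proposition1:
  fixes n :: nat and q :: "nat \<Rightarrow> complex" and lam :: "nat \<Rightarrow> complex measure"
  assumes "n \<ge> 1"
    and "base_points n q"
    and "\<forall>i<n. prob_space (lam i) \<and> sets (lam i) = sets (restrict_space borel (cball (0::complex) 1))"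
    and "AE P in PiM {..<n} lam. P \<in> Omega n q"
  shows "(\<forall>\<phi>. rel_homeo \<phi> \<and> (\<forall>i<n. preserves \<phi> (lam i)) \<longrightarrow>
            (\<lambda>P. beta n q P \<phi>) \<in> measurable (PiM {..<n} lam) (count_space UNIV))
       \<and> (\<forall>\<phi> \<psi>. rel_homeo \<phi> \<and> (\<forall>i<n. preserves \<phi> (lam i))
              \<and> rel_homeo \<psi> \<and> (\<forall>i<n. preserves \<psi> (lam i)) \<longrightarrow>
            (AE P in PiM {..<n} lam. (\<forall>i<n. P i \<in> ball 0 1) \<longrightarrow>
               beta n q P (\<psi> \<circ> \<phi>) = braid_mult n (beta n q P \<phi>) (beta n q (jmap n \<phi> P) \<psi>)))"
proof (intro conjI allI impI)
  have sl: "\<forall>i<n. sets (lam i) = sets (restrict_space borel (cball (0::complex) 1))" using assms(3) by blast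
  have pr: "\<forall>i<n. prob_space (lam i)" using assms(3) by blast
  fix \<phi> :: "complex \<Rightarrow> complex"
  assume h: "rel_homeo \<phi> \<and> (\<forall>i<n. preserves \<phi> (lam i))"
  show "(\<lambda>P. beta n q P \<phi>) \<in> measurable (PiM {..<n} lam) (count_space UNIV)"
    using meas_beta[OF assms(2) _ sl] h by blast
next
  have pr: "\<forall>i<n. prob_space (lam i)" using assms(3) by blast
  fix \<phi> \<psi> :: "complex \<Rightarrow> complex"
  assume h: "rel_homeo \<phi> \<and> (\<forall>i<n. preserves \<phi> (lam i)) \<and> rel_homeo \<psi> \<and> (\<forall>i<n. preserves \<psi> (lam i))"
  show "AE P in PiM {..<n} lam. (\<forall>i<n. P i \<in> ball 0 1) \<longrightarrow>
               beta n q P (\<psi> \<circ> \<phi>) = braid_mult n (beta n q P \<phi>) (beta n q (jmap n \<phi> P) \<psi>)"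
    by (rule ae_part[OF assms(2) pr assms(4)]) (use h in auto)
qed

end
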